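(* Let $R$ be a discrete valuation ring of characteristic $p>0$ with field of fractions $K$. Let $H$ be a primitively generated $K$-Hopf algebra of rank $p^n$, let $t_1,\dots,t_n$ be a $K$-basis of $\mathrm{Prim}(H)$, and suppose the associated matrix $B=(b_{j,i})$ (defined by $t_i^p=\sum_j b_{j,i}t_j$) lies in $M_n(R)$. Let $A=(a_{j,i})\in M_n(R)$ and suppose there exists $\Theta=(\theta_{j,i})\in\mathrm{GL}_n(K)$ with $\Theta A=B\Theta^{(p)}$, where $\Theta^{(p)}=(\theta_{j,i}^p)$. Let \[H_0=R[u_1,\dots,u_n]\big/\Big(u_i^p-\sum_{j=1}^n a_{j,i}u_j : 1\le i\le n\Big),\qquad \Delta(u_i)=u_i\otimes 1+1\otimes u_i.\] Then $H_0$ can be embedded in $H$ as an $R$-Hopf order. Furthermore: (1) $H_0$ embeds in $H$ via $\Theta$, i.e. via $u_i\mapsto\sum_j\theta_{j,i}t_j$, so that its image is \[R\Big[\Big\{\sum_{j=1}^n\theta_{j,i}t_j : 1\le i\le n\Big\}\Big]\subseteq H;\] (2) if $A,A'\in M_n(R)$ and $\Theta,\Theta'\in\mathrm{GL}_n(K)$ satisfy $\Theta A=B\Theta^{(p)}$ and $\Theta'A'=B\Theta'^{(p)}$, and $H_0,H_0'$ denote the corresponding Hopf orders in $H$ obtained via the embeddings $\Theta,\Theta'$ as in (1), then $H_0=H_0'$ if and only if $\Theta^{-1}\Theta'\in \mathrm{GL}_n(R)$.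
   Context: All Hopf algebras are commutative, cocommutative, finitely generated projective, of $p$-power rank. $t$ is primitive if $\Delta(t)=t\otimes1+1\otimes t$; $\mathrm{Prim}(H)$ is the module of primitives; $H$ is primitively generated if generated as an algebra by its primitives. An $R$-Hopf order in a $K$-Hopf algebra $H$ is a finitely generated projective $R$-submodule $H_0\subseteq H$ which is an $R$-Hopf algebra under the operations inherited from $H$ with $KH_0=H$. *)

theory Defs
  imports "HOL-Library.Poly_Mapping" "Jordan_Normal_Form.Matrix"
begin

text \<open>A normalized discrete valuation on the field K (the value at 0 is irrelevant,
  it stands for +infinity). The associated discrete valuation ring R has K as
  its field of fractions.\<close>
definition discrete_valuation :: "('k::field \<Rightarrow> int) \<Rightarrow> bool" where
  "discrete_valuation v \<longleftrightarrow>
     (\<forall>x y. x \<noteq> 0 \<and> y \<noteq> 0 \<longrightarrow> v (x * y) = v x + v y) \<and>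
     (\<forall>x y. x \<noteq> 0 \<and> y \<noteq> 0 \<and> x + y \<noteq> 0 \<longrightarrow> min (v x) (v y) \<le> v (x + y)) \<and>
     (\<exists>\<pi>. \<pi> \<noteq> 0 \<and> v \<pi> = 1)"

definition valuation_ring :: "('k::field \<Rightarrow> int) \<Rightarrow> 'k set" where
  "valuation_ring v = {x. x = 0 \<or> 0 \<le> v x}"

text \<open>Scalars from a set C (e.g. R or K), acting on 'a via the structure map sc.\<close>
definition alg_map :: "('k::field \<Rightarrow> 'a::comm_ring_1) \<Rightarrow> bool" where
  "alg_map sc \<longleftrightarrow> (\<forall>a b. sc (a + b) = sc a + sc b) \<and> (\<forall>a b. sc (a * b) = sc a * sc b) \<and> sc 1 = 1"

definition span_over :: "('k \<Rightarrow> 'a::comm_ring_1) \<Rightarrow> 'k set \<Rightarrow> 'a set \<Rightarrow> 'a set" where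
  "span_over sc C X = {y. \<exists>F c. finite F \<and> F \<subseteq> X \<and> (\<forall>x\<in>F. c x \<in> C) \<and> y = (\<Sum>x\<in>F. sc (c x) * x)}"

definition lin_indep_over :: "('k::zero \<Rightarrow> 'a::comm_ring_1) \<Rightarrow> 'k set \<Rightarrow> ('i \<Rightarrow> 'a) \<Rightarrow> 'i set \<Rightarrow> bool" where
  "lin_indep_over sc C e I \<longleftrightarrow>
     (\<forall>F c. finite F \<and> F \<subseteq> I \<and> (\<forall>i\<in>F. c i \<in> C) \<and> (\<Sum>i\<in>F. sc (c i) * e i) = 0 \<longrightarrow> (\<forall>i\<in>F. c i = 0))"

definition basis_over :: "('k::zero \<Rightarrow> 'a::comm_ring_1) \<Rightarrow> 'k set \<Rightarrow> ('i \<Rightarrow> 'a) \<Rightarrow> 'i set \<Rightarrow> 'a set \<Rightarrow> bool" where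
  "basis_over sc C e I X \<longleftrightarrow> inj_on e I \<and> lin_indep_over sc C e I \<and> span_over sc C (e ` I) = X"

definition klinear :: "('k \<Rightarrow> 'a::comm_ring_1) \<Rightarrow> ('k \<Rightarrow> 'b::comm_ring_1) \<Rightarrow> ('a \<Rightarrow> 'b) \<Rightarrow> bool" where
  "klinear sa sb f \<longleftrightarrow> (\<forall>x y. f (x + y) = f x + f y) \<and> (\<forall>c x. f (sa c * x) = sb c * f x)"

inductive_set gen_alg :: "('k \<Rightarrow> 'a::comm_ring_1) \<Rightarrow> 'k set \<Rightarrow> 'a set \<Rightarrow> 'a set"
  for sc C X where
  scal: "c \<in> C \<Longrightarrow> sc c \<in> gen_alg sc C X"
| gen: "x \<in> X \<Longrightarrow> x \<in> gen_alg sc C X"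
| add: "x \<in> gen_alg sc C X \<Longrightarrow> y \<in> gen_alg sc C X \<Longrightarrow> x + y \<in> gen_alg sc C X"
| mult: "x \<in> gen_alg sc C X \<Longrightarrow> y \<in> gen_alg sc C X \<Longrightarrow> x * y \<in> gen_alg sc C X"

text \<open>hh (with structure map sh and tp) is the tensor product H \<otimes>_K H of the
  finite-dimensional K-algebra h (structure map s): tp is K-bilinear, multiplicative,
  and sends products of a K-basis of H to a K-basis of hh.\<close>
definition is_tensor2 :: "('k::field \<Rightarrow> 'h::comm_ring_1) \<Rightarrow> ('k \<Rightarrow> 'hh::comm_ring_1) \<Rightarrow>
    ('h \<Rightarrow> 'h \<Rightarrow> 'hh) \<Rightarrow> bool" where
  "is_tensor2 s sh tp \<longleftrightarrow>
     (\<forall>x x' y. tp (x + x') y = tp x y + tp x' y) \<and>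
     (\<forall>x y y'. tp x (y + y') = tp x y + tp x y') \<and>
     (\<forall>c x y. tp (s c * x) y = sh c * tp x y) \<and>
     (\<forall>c x y. tp x (s c * y) = sh c * tp x y) \<and>
     (\<forall>x x' y y'. tp x y * tp x' y' = tp (x * x') (y * y')) \<and>
     tp 1 1 = 1 \<and>
     (\<exists>(m::nat) e. basis_over s UNIV e {..<m} UNIV \<and>
        basis_over sh UNIV (\<lambda>(i, j). tp (e i) (e j)) ({..<m} \<times> {..<m}) UNIV)"

definition is_tensor3 :: "('k::field \<Rightarrow> 'h::comm_ring_1) \<Rightarrow> ('k \<Rightarrow> 'hhh::comm_ring_1) \<Rightarrow>
    ('h \<Rightarrow> 'h \<Rightarrow> 'h \<Rightarrow> 'hhh) \<Rightarrow> bool" where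
  "is_tensor3 s sh tp3 \<longleftrightarrow>
     (\<forall>x x' y z. tp3 (x + x') y z = tp3 x y z + tp3 x' y z) \<and>
     (\<forall>x y y' z. tp3 x (y + y') z = tp3 x y z + tp3 x y' z) \<and>
     (\<forall>x y z z'. tp3 x y (z + z') = tp3 x y z + tp3 x y z') \<and>
     (\<forall>c x y z. tp3 (s c * x) y z = sh c * tp3 x y z) \<and>
     (\<forall>c x y z. tp3 x (s c * y) z = sh c * tp3 x y z) \<and>
     (\<forall>c x y z. tp3 x y (s c * z) = sh c * tp3 x y z) \<and>
     (\<forall>x x' y y' z z'. tp3 x y z * tp3 x' y' z' = tp3 (x * x') (y * y') (z * z')) \<and>
     tp3 1 1 1 = 1 \<and>
     (\<exists>(m::nat) e. basis_over s UNIV e {..<m} UNIV \<and>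
        basis_over sh UNIV (\<lambda>(i, j, k). tp3 (e i) (e j) (e k)) ({..<m} \<times> {..<m} \<times> {..<m}) UNIV)"

definition comm_cocomm_hopf ::
  "('k::field \<Rightarrow> 'h::comm_ring_1) \<Rightarrow> ('k \<Rightarrow> 'hh::comm_ring_1) \<Rightarrow> ('k \<Rightarrow> 'hhh::comm_ring_1) \<Rightarrow>
   ('h \<Rightarrow> 'h \<Rightarrow> 'hh) \<Rightarrow> ('h \<Rightarrow> 'h \<Rightarrow> 'h \<Rightarrow> 'hhh) \<Rightarrow>
   ('h \<Rightarrow> 'hh) \<Rightarrow> ('h \<Rightarrow> 'k) \<Rightarrow> ('h \<Rightarrow> 'h) \<Rightarrow> bool" where
  "comm_cocomm_hopf s sh shh tp tp3 \<Delta> \<epsilon> S \<longleftrightarrow>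
     alg_map s \<and> alg_map sh \<and> alg_map shh \<and>
     is_tensor2 s sh tp \<and> is_tensor3 s shh tp3 \<and>
     \<comment> \<open>comultiplication is a K-algebra map\<close>
     (\<forall>x y. \<Delta> (x + y) = \<Delta> x + \<Delta> y) \<and> (\<forall>x y. \<Delta> (x * y) = \<Delta> x * \<Delta> y) \<and> \<Delta> 1 = 1 \<and>
     (\<forall>c x. \<Delta> (s c * x) = sh c * \<Delta> x) \<and>
     \<comment> \<open>counit is a K-algebra map\<close>
     (\<forall>x y. \<epsilon> (x + y) = \<epsilon> x + \<epsilon> y) \<and> (\<forall>x y. \<epsilon> (x * y) = \<epsilon> x * \<epsilon> y) \<and> \<epsilon> 1 = 1 \<and>
     (\<forall>c x. \<epsilon> (s c * x) = c * \<epsilon> x) \<and>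
     \<comment> \<open>coassociativity: (\<Delta> \<otimes> id) \<Delta> = (id \<otimes> \<Delta>) \<Delta>\<close>
     (\<exists>F G L1 L2.
        (\<forall>y. klinear sh shh (F y)) \<and> (\<forall>a b y. F y (tp a b) = tp3 a b y) \<and>
        (\<forall>x. klinear sh shh (G x)) \<and> (\<forall>x a b. G x (tp a b) = tp3 x a b) \<and>
        klinear sh shh L1 \<and> (\<forall>x y. L1 (tp x y) = F y (\<Delta> x)) \<and>
        klinear sh shh L2 \<and> (\<forall>x y. L2 (tp x y) = G x (\<Delta> y)) \<and>
        (\<forall>x. L1 (\<Delta> x) = L2 (\<Delta> x))) \<and>
     \<comment> \<open>counit axioms: (\<epsilon> \<otimes> id) \<Delta> = id = (id \<otimes> \<epsilon>) \<Delta>\<close>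
     (\<exists>L. klinear sh s L \<and> (\<forall>x y. L (tp x y) = s (\<epsilon> x) * y) \<and> (\<forall>x. L (\<Delta> x) = x)) \<and>
     (\<exists>L. klinear sh s L \<and> (\<forall>x y. L (tp x y) = x * s (\<epsilon> y)) \<and> (\<forall>x. L (\<Delta> x) = x)) \<and>
     \<comment> \<open>antipode: K-linear, m (S \<otimes> id) \<Delta> = \<epsilon> = m (id \<otimes> S) \<Delta>\<close>
     klinear s s S \<and>
     (\<exists>L. klinear sh s L \<and> (\<forall>x y. L (tp x y) = S x * y) \<and> (\<forall>x. L (\<Delta> x) = s (\<epsilon> x))) \<and>
     (\<exists>L. klinear sh s L \<and> (\<forall>x y. L (tp x y) = x * S y) \<and> (\<forall>x. L (\<Delta> x) = s (\<epsilon> x))) \<and>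
     \<comment> \<open>cocommutativity: \<tau> \<Delta> = \<Delta> for the twist \<tau>\<close>
     (\<exists>T. klinear sh sh T \<and> (\<forall>x y. T (tp x y) = tp y x) \<and> (\<forall>x. T (\<Delta> x) = \<Delta> x))"

definition prim :: "('h \<Rightarrow> 'h \<Rightarrow> 'hh::comm_ring_1) \<Rightarrow> ('h::comm_ring_1 \<Rightarrow> 'hh) \<Rightarrow> 'h set" where
  "prim tp \<Delta> = {t. \<Delta> t = tp t 1 + tp 1 t}"

text \<open>X is an R-Hopf order in H: an R-subalgebra which is finitely generated projective
  (over the DVR R: free of finite rank) as R-module, spans H over K, and is closed under
  comultiplication (into the image of X \<otimes>_R X in H \<otimes>_K H), counit and antipode.\<close>
definition hopf_order ::
  "('k::field \<Rightarrow> 'h::comm_ring_1) \<Rightarrow> ('k \<Rightarrow> 'hh::comm_ring_1) \<Rightarrow> ('h \<Rightarrow> 'h \<Rightarrow> 'hh) \<Rightarrow>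
   ('h \<Rightarrow> 'hh) \<Rightarrow> ('h \<Rightarrow> 'k) \<Rightarrow> ('h \<Rightarrow> 'h) \<Rightarrow> 'k set \<Rightarrow> 'h set \<Rightarrow> bool" where
  "hopf_order s sh tp \<Delta> \<epsilon> S R X \<longleftrightarrow>
     1 \<in> X \<and> (\<forall>x\<in>X. \<forall>y\<in>X. x + y \<in> X \<and> x * y \<in> X) \<and> (\<forall>r\<in>R. \<forall>x\<in>X. s r * x \<in> X) \<and>
     (\<exists>(m::nat) e. basis_over s R e {..<m} X) \<and>
     span_over s UNIV X = UNIV \<and>
     (\<forall>x\<in>X. \<Delta> x \<in> span_over sh R {tp a b | a b. a \<in> X \<and> b \<in> X}) \<and>
     (\<forall>x\<in>X. \<epsilon> x \<in> R) \<and> (\<forall>x\<in>X. S x \<in> X)"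

type_synonym 'k mpoly = "(nat \<Rightarrow>\<^sub>0 nat) \<Rightarrow>\<^sub>0 'k"

definition var :: "nat \<Rightarrow> 'k::comm_ring_1 mpoly" where
  "var i = Poly_Mapping.single (Poly_Mapping.single i 1) 1"

definition const :: "'k::comm_ring_1 \<Rightarrow> 'k mpoly" where
  "const c = Poly_Mapping.single 0 c"

definition polys_over :: "'k::comm_ring_1 set \<Rightarrow> nat \<Rightarrow> 'k mpoly set" where
  "polys_over R n = {P. (\<forall>m. Poly_Mapping.lookup P m \<in> R) \<and> (\<forall>m\<in>Poly_Mapping.keys P. Poly_Mapping.keys m \<subseteq> {..<n})}"

definition eval_mpoly :: "('k \<Rightarrow> 'a::comm_ring_1) \<Rightarrow> (nat \<Rightarrow> 'a) \<Rightarrow> 'k::comm_ring_1 mpoly \<Rightarrow> 'a" where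
  "eval_mpoly sc x P = (\<Sum>m\<in>Poly_Mapping.keys P. sc (Poly_Mapping.lookup P m) * (\<Prod>i\<in>Poly_Mapping.keys m. x i ^ Poly_Mapping.lookup m i))"

definition ideal_gen :: "'k::comm_ring_1 set \<Rightarrow> nat \<Rightarrow> (nat \<Rightarrow> 'k mpoly) \<Rightarrow> 'k mpoly set" where
  "ideal_gen R n f = {(\<Sum>i<n. g i * f i) | g. \<forall>i<n. g i \<in> polys_over R n}"

definition rel_polys :: "nat \<Rightarrow> nat \<Rightarrow> 'k::comm_ring_1 mat \<Rightarrow> nat \<Rightarrow> 'k mpoly" where
  "rel_polys p n A i = var i ^ p - (\<Sum>j<n. const (A $$ (j, i)) * var j)"

definition entries_in :: "'k set \<Rightarrow> 'k mat \<Rightarrow> bool" where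
  "entries_in C M \<longleftrightarrow> (\<forall>i<dim_row M. \<forall>j<dim_col M. M $$ (i, j) \<in> C)"

definition GL_over :: "'k::comm_ring_1 set \<Rightarrow> nat \<Rightarrow> 'k mat \<Rightarrow> bool" where
  "GL_over C n M \<longleftrightarrow> M \<in> carrier_mat n n \<and> entries_in C M \<and>
     (\<exists>N \<in> carrier_mat n n. entries_in C N \<and> M * N = 1\<^sub>m n \<and> N * M = 1\<^sub>m n)"

definition frob_mat :: "nat \<Rightarrow> 'k::comm_ring_1 mat \<Rightarrow> 'k mat" where
  "frob_mat p M = map_mat (\<lambda>x. x ^ p) M"

text \<open>The elements sum_j theta_{j,i} t_j (images of the u_i under the embedding via Theta).\<close>
definition theta_elems :: "('k \<Rightarrow> 'h::comm_ring_1) \<Rightarrow> nat \<Rightarrow> 'k mat \<Rightarrow> (nat \<Rightarrow> 'h) \<Rightarrow> nat \<Rightarrow> 'h" where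
  "theta_elems s n \<Theta> t i = (\<Sum>j<n. s (\<Theta> $$ (j, i)) * t j)"

end

theory Submission
  imports Defs "HOL-Computational_Algebra.Primes"
begin


context
  fixes v :: "'k::field \<Rightarrow> int"
  assumes dv: "discrete_valuation v"
begin

lemma dv_mult: "x \<noteq> 0 \<Longrightarrow> y \<noteq> 0 \<Longrightarrow> v (x * y) = v x + v y"
  using dv unfolding discrete_valuation_def by blast

lemma dv_add: "x \<noteq> 0 \<Longrightarrow> y \<noteq> 0 \<Longrightarrow> x + y \<noteq> 0 \<Longrightarrow> min (v x) (v y) \<le> v (x + y)"
  using dv unfolding discrete_valuation_def by blast

lemma dv_one: "v 1 = 0"
  using dv_mult[of 1 1] by simp

lemma dv_m1: "v (-1) = 0"
  using dv_mult[of "-1" "-1"] dv_one by simp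

lemma dv_neg: "x \<noteq> 0 \<Longrightarrow> v (-x) = v x"
  using dv_mult[of "-1" x] dv_m1 by simp

lemma R_0[simp]: "0 \<in> valuation_ring v" by (simp add: valuation_ring_def)
lemma R_1[simp]: "1 \<in> valuation_ring v" by (simp add: valuation_ring_def dv_one)

lemma R_add: "x \<in> valuation_ring v \<Longrightarrow> y \<in> valuation_ring v \<Longrightarrow> x + y \<in> valuation_ring v"
proof -
  assume x: "x \<in> valuation_ring v" and y: "y \<in> valuation_ring v"
  show ?thesis
  proof (cases "x = 0 \<or> y = 0 \<or> x + y = 0")
    case True
    then show ?thesis using x y by (auto simp: valuation_ring_def)
  next
    case False
    then have "min (v x) (v y) \<le> v (x + y)" using dv_add by blast
    moreover have "0 \<le> v x" "0 \<le> v y" using x y False by (auto simp: valuation_ring_def)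
    ultimately have "0 \<le> v (x + y)" by linarith
    then show ?thesis by (simp add: valuation_ring_def)
  qed
qed

lemma R_mult: "x \<in> valuation_ring v \<Longrightarrow> y \<in> valuation_ring v \<Longrightarrow> x * y \<in> valuation_ring v"
proof -
  assume x: "x \<in> valuation_ring v" and y: "y \<in> valuation_ring v"
  show ?thesis
  proof (cases "x = 0 \<or> y = 0")
    case True
    then show ?thesis by (auto simp: valuation_ring_def)
  next
    case False
    then have "v (x * y) = v x + v y" using dv_mult by blast
    moreover have "0 \<le> v x" "0 \<le> v y" using x y False by (auto simp: valuation_ring_def)
    ultimately show ?thesis by (simp add: valuation_ring_def)
  qed
qed

lemma R_uminus: "x \<in> valuation_ring v \<Longrightarrow> - x \<in> valuation_ring v"
  unfolding valuation_ring_def using dv_neg[of x] by (cases "x = 0") auto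

lemma R_diff: "x \<in> valuation_ring v \<Longrightarrow> y \<in> valuation_ring v \<Longrightarrow> x - y \<in> valuation_ring v"
  unfolding diff_conv_add_uminus by (intro R_add R_uminus)

lemma R_sum: "(\<And>i. i \<in> F \<Longrightarrow> f i \<in> valuation_ring v) \<Longrightarrow> sum f F \<in> valuation_ring v"
  by (induction F rule: infinite_finite_induct) (auto intro: R_add)

lemma R_prod: "(\<And>i. i \<in> F \<Longrightarrow> f i \<in> valuation_ring v) \<Longrightarrow> prod f F \<in> valuation_ring v"
  by (induction F rule: infinite_finite_induct) (auto intro: R_mult)

lemma R_power: "x \<in> valuation_ring v \<Longrightarrow> x ^ k \<in> valuation_ring v"
  by (induction k) (auto intro: R_mult)

lemma R_of_nat: "of_nat k \<in> valuation_ring v"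
  by (induction k) (auto intro: R_add)

end

context
  fixes sc :: "'k::field \<Rightarrow> 'a::comm_ring_1"
  assumes am: "alg_map sc"
begin

lemma am_add: "sc (a + b) = sc a + sc b" using am by (simp add: alg_map_def)
lemma am_mult: "sc (a * b) = sc a * sc b" using am by (simp add: alg_map_def)
lemma am_one: "sc 1 = 1" using am by (simp add: alg_map_def)
lemma am_zero: "sc 0 = 0" using am_add[of 0 0] by simp
lemma am_uminus: "sc (- a) = - sc a"
  using am_add[of a "-a"] am_zero minus_unique[of "sc a" "sc (-a)"] by simp
lemma am_diff: "sc (a - b) = sc a - sc b"
  using am_add[of a "-b"] am_uminus[of b] by simp
lemma am_sum: "sc (sum f F) = (\<Sum>i\<in>F. sc (f i))"
  by (induction F rule: infinite_finite_induct) (auto simp: am_add am_zero)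
lemma am_prod: "sc (prod f F) = (\<Prod>i\<in>F. sc (f i))"
  by (induction F rule: infinite_finite_induct) (auto simp: am_mult am_one)
lemma am_power: "sc (a ^ k) = sc a ^ k"
  by (induction k) (auto simp: am_mult am_one)
lemma am_of_nat: "sc (of_nat k) = of_nat k"
  by (induction k) (auto simp: am_add am_one am_zero)
lemma am_eq0: "sc a = 0 \<longleftrightarrow> a = 0"
proof
  assume "sc a = 0"
  show "a = 0"
  proof (rule ccontr)
    assume "a \<noteq> 0"
    then have "sc (a * inverse a) = 1" by (simp add: am_one)
    with \<open>sc a = 0\<close> show False by (simp add: am_mult)
  qed
qed (simp add: am_zero)
lemma am_inj: "sc a = sc b \<longleftrightarrow> a = b"
  using am_eq0[of "a - b"] by (simp add: am_diff)

end

lemma frob_add: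
  fixes x y :: "'a::comm_ring_1"
  assumes "prime p" "of_nat p = (0::'a)"
  shows "(x + y) ^ p = x ^ p + y ^ p"
proof -
  have p0: "p \<noteq> 0" "p > 0" using assms(1) prime_gt_0_nat by auto
  have "(x + y) ^ p = (\<Sum>k\<le>p. of_nat (p choose k) * x ^ k * y ^ (p - k))"
    by (rule binomial_ring)
  also have "\<dots> = (\<Sum>k\<in>{0, p}. of_nat (p choose k) * x ^ k * y ^ (p - k))"
  proof (rule sum.mono_neutral_right)
    show "\<forall>k\<in>{..p} - {0, p}. of_nat (p choose k) * x ^ k * y ^ (p - k) = 0"
    proof
      fix k assume k: "k \<in> {..p} - {0, p}"
      then have "p dvd (p choose k)" using dvd_choose_prime[of k p] assms(1) p0 by auto
      then obtain q where "p choose k = p * q" by blast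
      then have "(of_nat (p choose k) :: 'a) = 0" using assms(2) by simp
      then show "of_nat (p choose k) * x ^ k * y ^ (p - k) = 0" by simp
    qed
  qed auto
  also have "\<dots> = x ^ p + y ^ p" using p0 by (simp add: add.commute)
  finally show ?thesis .
qed

lemma frob_sum:
  fixes f :: "'b \<Rightarrow> 'a::comm_ring_1"
  assumes "prime p" "of_nat p = (0::'a)"
  shows "(sum f F) ^ p = (\<Sum>i\<in>F. f i ^ p)"
proof (induction F rule: infinite_finite_induct)
  case (infinite A)
  then show ?case using assms(1) prime_gt_0_nat by (simp add: zero_power)
next
  case empty
  then show ?case using assms(1) prime_gt_0_nat by (simp add: zero_power)
next
  case (insert x F)
  then show ?case by (simp add: frob_add[OF assms])
qed




section \<open>R-spans\<close>

inductive_set rspan :: "('k \<Rightarrow> 'a::comm_ring_1) \<Rightarrow> 'k set \<Rightarrow> 'a set \<Rightarrow> 'a set"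
  for sc C Y where
  zero: "0 \<in> rspan sc C Y"
| gen: "c \<in> C \<Longrightarrow> y \<in> Y \<Longrightarrow> sc c * y \<in> rspan sc C Y"
| add: "x \<in> rspan sc C Y \<Longrightarrow> y \<in> rspan sc C Y \<Longrightarrow> x + y \<in> rspan sc C Y"

definition subr :: "'k::comm_ring_1 set \<Rightarrow> bool" where
  "subr C \<longleftrightarrow> 0 \<in> C \<and> 1 \<in> C \<and> (\<forall>x\<in>C. \<forall>y\<in>C. x + y \<in> C \<and> x * y \<in> C)"

lemma subr_UNIV: "subr UNIV" by (simp add: subr_def)

lemma subr_R: "discrete_valuation v \<Longrightarrow> subr (valuation_ring v)"
  by (simp add: subr_def R_add R_mult)

lemma subr_sum: "subr C \<Longrightarrow> (\<And>i. i \<in> F \<Longrightarrow> f i \<in> C) \<Longrightarrow> sum f F \<in> C"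
  by (induction F rule: infinite_finite_induct) (auto simp: subr_def)

context
  fixes sc :: "'k::field \<Rightarrow> 'a::comm_ring_1" and C :: "'k set"
  assumes am: "alg_map sc" and sr: "subr C"
begin

lemma C0: "0 \<in> C" and C1: "1 \<in> C" and Cadd: "x \<in> C \<Longrightarrow> y \<in> C \<Longrightarrow> x + y \<in> C"
  and Cmult: "x \<in> C \<Longrightarrow> y \<in> C \<Longrightarrow> x * y \<in> C"
  using sr by (auto simp: subr_def)

lemma rspan_gen1: "y \<in> Y \<Longrightarrow> y \<in> rspan sc C Y"
  using rspan.gen[OF C1, of y Y sc] by (simp add: am_one[OF am])

lemma rspan_scal: assumes "c \<in> C" "x \<in> rspan sc C Y" shows "sc c * x \<in> rspan sc C Y"
  using assms(2)
proof (induction x rule: rspan.induct)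
  case zero then show ?case by (simp add: rspan.zero)
next
  case (gen d y)
  have "sc c * (sc d * y) = sc (c * d) * y" by (simp add: am_mult[OF am])
  then show ?case using gen Cmult assms(1) by (auto intro: rspan.gen)
next
  case (add x y)
  then show ?case by (simp add: distrib_left rspan.add)
qed

lemma rspan_sum: "(\<And>i. i \<in> F \<Longrightarrow> f i \<in> rspan sc C Y) \<Longrightarrow> sum f F \<in> rspan sc C Y"
  by (induction F rule: infinite_finite_induct) (auto intro: rspan.zero rspan.add)

lemma rspan_uminus_aux: "x \<in> rspan sc C Y \<Longrightarrow> (- 1) \<in> C \<Longrightarrow> - x \<in> rspan sc C Y"
  using rspan_scal[of "-1" x Y] by (simp add: am_uminus[OF am] am_one[OF am])

lemma rspan_subset: assumes "Y \<subseteq> rspan sc C Y'" "x \<in> rspan sc C Y" shows "x \<in> rspan sc C Y'"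
  using assms(2) by (induction x rule: rspan.induct) (use assms(1) in \<open>auto intro: rspan.zero rspan.add rspan_scal\<close>)

lemma rspan_mono: "Y \<subseteq> Y' \<Longrightarrow> x \<in> rspan sc C Y \<Longrightarrow> x \<in> rspan sc C Y'"
  using rspan_subset[of Y Y' x] rspan_gen1 by blast

lemma rspan_mult_right:
  assumes "\<And>y. y \<in> Y \<Longrightarrow> y * w \<in> rspan sc C Y'" "x \<in> rspan sc C Y"
  shows "x * w \<in> rspan sc C Y'"
  using assms(2)
proof (induction x rule: rspan.induct)
  case zero then show ?case by (simp add: rspan.zero)
next
  case (gen c y)
  then show ?case using assms(1)[of y] rspan_scal[of c "y * w" Y'] by (simp add: mult.assoc)
next
  case (add x y)
  then show ?case by (simp add: distrib_right rspan.add)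
qed

lemma rspan_mult_closed:
  assumes "\<And>y y'. y \<in> Y \<Longrightarrow> y' \<in> Y \<Longrightarrow> y * y' \<in> rspan sc C Y"
    and "x \<in> rspan sc C Y" "x' \<in> rspan sc C Y"
  shows "x * x' \<in> rspan sc C Y"
proof -
  have "y * x' \<in> rspan sc C Y" if "y \<in> Y" for y
  proof -
    have "x' * y \<in> rspan sc C Y"
      by (rule rspan_mult_right[OF _ assms(3)]) (use assms(1) that in \<open>simp add: mult.commute\<close>)
    then show ?thesis by (simp add: mult.commute)
  qed
  then show ?thesis using rspan_mult_right[OF _ assms(2)] by blast
qed

lemma rspan_eq_span_over: "rspan sc C Y = span_over sc C Y"
proof
  show "rspan sc C Y \<subseteq> span_over sc C Y"
  proof
    fix x assume "x \<in> rspan sc C Y"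
    then show "x \<in> span_over sc C Y"
    proof (induction x rule: rspan.induct)
      case zero
      then show ?case unfolding span_over_def by (rule CollectI, rule exI[of _ "{}"]) auto
    next
      case (gen c y)
      then show ?case unfolding span_over_def
        by (intro CollectI exI[of _ "{y}"] exI[of _ "\<lambda>_. c"]) auto
    next
      case (add x y)
      from add.IH(1) obtain F c where F: "finite F" "F \<subseteq> Y" "\<forall>x\<in>F. c x \<in> C"
        "x = (\<Sum>x\<in>F. sc (c x) * x)" unfolding span_over_def by blast
      from add.IH(2) obtain G d where G: "finite G" "G \<subseteq> Y" "\<forall>x\<in>G. d x \<in> C"
        "y = (\<Sum>x\<in>G. sc (d x) * x)" unfolding span_over_def by blast
      define c' where "c' z = (if z \<in> F then c z else 0)" for z
      define d' where "d' z = (if z \<in> G then d z else 0)" for z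
      have x': "x = (\<Sum>z\<in>F \<union> G. sc (c' z) * z)"
        unfolding F(4) using F(1) G(1)
        by (intro sum.mono_neutral_cong_left) (auto simp: c'_def am_zero[OF am])
      have y': "y = (\<Sum>z\<in>F \<union> G. sc (d' z) * z)"
        unfolding G(4) using F(1) G(1)
        by (intro sum.mono_neutral_cong_left) (auto simp: d'_def am_zero[OF am])
      have "x + y = (\<Sum>z\<in>F \<union> G. sc (c' z + d' z) * z)"
        unfolding x' y' by (simp add: am_add[OF am] distrib_right sum.distrib)
      moreover have "\<forall>z\<in>F \<union> G. c' z + d' z \<in> C"
        using F(3) G(3) C0 Cadd by (auto simp: c'_def d'_def)
      ultimately show ?case unfolding span_over_def using F G
        by (intro CollectI exI[of _ "F \<union> G"] exI[of _ "\<lambda>z. c' z + d' z"]) auto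
    qed
  qed
  show "span_over sc C Y \<subseteq> rspan sc C Y"
  proof
    fix x assume "x \<in> span_over sc C Y"
    then obtain F c where F: "finite F" "F \<subseteq> Y" "\<forall>x\<in>F. c x \<in> C"
        "x = (\<Sum>x\<in>F. sc (c x) * x)" unfolding span_over_def by blast
    show "x \<in> rspan sc C Y" unfolding F(4)
      by (rule rspan_sum) (use F in \<open>auto intro: rspan.gen\<close>)
  qed
qed

end

lemma gen_alg_min:
  assumes "\<And>c. c \<in> C \<Longrightarrow> sc c \<in> Z" "Y \<subseteq> Z"
    "\<And>x y. x \<in> Z \<Longrightarrow> y \<in> Z \<Longrightarrow> x + y \<in> Z" "\<And>x y. x \<in> Z \<Longrightarrow> y \<in> Z \<Longrightarrow> x * y \<in> Z"
  shows "gen_alg sc C Y \<subseteq> Z"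
proof
  fix x assume "x \<in> gen_alg sc C Y"
  then show "x \<in> Z"
  proof (induction x rule: gen_alg.induct)
    case (scal c) then show ?case using assms(1) by blast
  next
    case (gen x) then show ?case using assms(2) by blast
  next
    case (add x y) then show ?case using assms(3) by blast
  next
    case (mult x y) then show ?case using assms(4) by blast
  qed
qed




locale hctx =
  fixes s :: "'k::field \<Rightarrow> 'h::comm_ring_1"
    and sh :: "'k \<Rightarrow> 'hh::comm_ring_1" and shh :: "'k \<Rightarrow> 'hhh::comm_ring_1"
    and tp :: "'h \<Rightarrow> 'h \<Rightarrow> 'hh" and tp3 :: "'h \<Rightarrow> 'h \<Rightarrow> 'h \<Rightarrow> 'hhh"
    and \<Delta> :: "'h \<Rightarrow> 'hh" and \<epsilon> :: "'h \<Rightarrow> 'k" and S :: "'h \<Rightarrow> 'h"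
    and v :: "'k \<Rightarrow> int" and p n :: nat and t :: "nat \<Rightarrow> 'h"
    and B :: "'k mat"
  assumes dvr: "discrete_valuation v"
    and char_p: "prime p" "of_nat p = (0::'k)"
    and hopf: "comm_cocomm_hopf s sh shh tp tp3 \<Delta> \<epsilon> S"
    and rank: "\<exists>e. basis_over s UNIV e {..<p ^ n} (UNIV :: 'h set)"
    and prim_gen: "gen_alg s UNIV (prim tp \<Delta>) = UNIV"
    and prim_basis: "basis_over s UNIV t {..<n} (prim tp \<Delta>)"
    and Bc: "B \<in> carrier_mat n n" and BR: "entries_in (valuation_ring v) B"
    and Bp: "\<forall>i<n. t i ^ p = (\<Sum>j<n. s (B $$ (j, i)) * t j)"
begin

abbreviation "R \<equiv> valuation_ring v"

lemma s_am: "alg_map s" and sh_am: "alg_map sh"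
  using hopf unfolding comm_cocomm_hopf_def by (elim conjE, blast)+

lemma tens: "is_tensor2 s sh tp" using hopf unfolding comm_cocomm_hopf_def by blast

lemma tp_add1: "tp (x + x') y = tp x y + tp x' y"
  and tp_add2: "tp x (y + y') = tp x y + tp x y'"
  and tp_scal1: "tp (s c * x) y = sh c * tp x y"
  and tp_scal2: "tp x (s c * y) = sh c * tp x y"
  and tp_mult: "tp x y * tp x' y' = tp (x * x') (y * y')"
  and tp_one: "tp 1 1 = 1"
  using tens unfolding is_tensor2_def by blast+

lemma D_add: "\<Delta> (x + y) = \<Delta> x + \<Delta> y"
  using hopf unfolding comm_cocomm_hopf_def by (elim conjE) (simp only:)

lemma D_mult: "\<Delta> (x * y) = \<Delta> x * \<Delta> y"
  using hopf unfolding comm_cocomm_hopf_def by (elim conjE) (simp only:)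

lemma D_one: "\<Delta> 1 = 1"
  using hopf unfolding comm_cocomm_hopf_def by (elim conjE) (simp only:)

lemma D_scal: "\<Delta> (s c * x) = sh c * \<Delta> x"
  using hopf unfolding comm_cocomm_hopf_def by (elim conjE) (simp only:)

lemma e_add: "\<epsilon> (x + y) = \<epsilon> x + \<epsilon> y"
  using hopf unfolding comm_cocomm_hopf_def by (elim conjE) (simp only:)

lemma e_mult: "\<epsilon> (x * y) = \<epsilon> x * \<epsilon> y"
  using hopf unfolding comm_cocomm_hopf_def by (elim conjE) (simp only:)

lemma e_one: "\<epsilon> 1 = 1"
  using hopf unfolding comm_cocomm_hopf_def by (elim conjE) (simp only:)

lemma e_scal: "\<epsilon> (s c * x) = c * \<epsilon> x"
  using hopf unfolding comm_cocomm_hopf_def by (elim conjE) (simp only:)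

lemma counit: "\<exists>L. klinear sh s L \<and> (\<forall>x y. L (tp x y) = s (\<epsilon> x) * y) \<and> (\<forall>x. L (\<Delta> x) = x)"
  using hopf unfolding comm_cocomm_hopf_def by (elim conjE) (simp only:)

lemma S_lin: "klinear s s S"
  using hopf unfolding comm_cocomm_hopf_def by (elim conjE) (simp only:)

lemma antipode: "\<exists>L. klinear sh s L \<and> (\<forall>x y. L (tp x y) = S x * y) \<and> (\<forall>x. L (\<Delta> x) = s (\<epsilon> x))"
  using hopf unfolding comm_cocomm_hopf_def by (elim conjE) (simp only:)

lemma S_add: "S (x + y) = S x + S y" and S_scal: "S (s c * x) = s c * S x"
  using S_lin unfolding klinear_def by blast+

lemma S_zero: "S 0 = 0" using S_add[of 0 0] by simp

lemma s_add: "s (a + b) = s a + s b" and s_mult: "s (a * b) = s a * s b" and s_one: "s 1 = 1"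
  and s_zero: "s 0 = 0" and s_uminus: "s (- a) = - s a" and s_diff: "s (a - b) = s a - s b"
  and s_sum: "s (sum f F) = (\<Sum>i\<in>F. s (f i))" and s_power: "s (a ^ k) = s a ^ k"
  and s_of_nat: "s (of_nat k) = of_nat k" and s_inj: "s a = s b \<longleftrightarrow> a = b"
  using am_add[OF s_am] am_mult[OF s_am] am_one[OF s_am] am_zero[OF s_am] am_uminus[OF s_am]
    am_diff[OF s_am] am_sum[OF s_am] am_power[OF s_am] am_of_nat[OF s_am] am_inj[OF s_am] by blast+

lemma sh_add: "sh (a + b) = sh a + sh b" and sh_mult: "sh (a * b) = sh a * sh b" and sh_one: "sh 1 = 1"
  and sh_zero: "sh 0 = 0"
  using am_add[OF sh_am] am_mult[OF sh_am] am_one[OF sh_am] am_zero[OF sh_am] by blast+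

lemma char_h: "of_nat p = (0::'h)"
  using s_of_nat[of p] char_p(2) s_zero by simp

lemma p_ge2: "p \<ge> 2" using char_p(1) prime_ge_2_nat by blast

lemma tp_zero1: "tp 0 y = 0" using tp_add1[of 0 0 y] by simp
lemma tp_zero2: "tp x 0 = 0" using tp_add2[of x 0 0] by simp

lemma subrR: "subr R" using subr_R[OF dvr] .

lemma R_add': "x \<in> R \<Longrightarrow> y \<in> R \<Longrightarrow> x + y \<in> R" using R_add[OF dvr] .
lemma R_mult': "x \<in> R \<Longrightarrow> y \<in> R \<Longrightarrow> x * y \<in> R" using R_mult[OF dvr] .
lemma R_uminus': "x \<in> R \<Longrightarrow> - x \<in> R" using R_uminus[OF dvr] .
lemma R_sum': "(\<And>i. i \<in> F \<Longrightarrow> f i \<in> R) \<Longrightarrow> sum f F \<in> R" using R_sum[OF dvr] .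

sublocale vs: vector_space "\<lambda>c x. s c * x"
  by unfold_locales (auto simp: s_add s_mult algebra_simps s_one)

lemma vs_span_eq: "vs.span Y = span_over s UNIV Y"
  unfolding vs.span_explicit span_over_def by auto

lemma rspan_UNIV_eq: "rspan s UNIV Y = vs.span Y"
  using rspan_eq_span_over[OF s_am subr_UNIV] vs_span_eq by simp

lemma basis_ex: "\<exists>Bas. finite Bas \<and> vs.independent Bas \<and> vs.span Bas = UNIV \<and> card Bas = p ^ n"
proof -
  obtain e where e: "basis_over s UNIV e {..<p ^ n} (UNIV :: 'h set)" using rank by blast
  let ?B = "e ` {..<p ^ n}"
  have inj: "inj_on e {..<p ^ n}" using e unfolding basis_over_def by blast
  have li: "lin_indep_over s UNIV e {..<p ^ n}" using e unfolding basis_over_def by blast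
  have sp: "span_over s UNIV ?B = UNIV" using e unfolding basis_over_def by blast
  have "vs.independent ?B"
    unfolding vs.independent_explicit_finite_subsets
  proof (intro allI impI ballI)
    fix T u x assume T: "T \<subseteq> ?B" "finite T" and u: "(\<Sum>v\<in>T. s (u v) * v) = 0" and x: "x \<in> T"
    define F where "F = {i\<in>{..<p^n}. e i \<in> T}"
    have eF: "e ` F = T" using T(1) unfolding F_def by auto
    have injF: "inj_on e F" using inj unfolding F_def by (rule inj_on_subset) auto
    have s0: "(\<Sum>i\<in>F. s (u (e i)) * e i) = 0"
      using u eF sum.reindex[OF injF, of "\<lambda>v. s (u v) * v"] by simp
    have F1: "F \<subseteq> {..<p^n}" "finite F" unfolding F_def by auto
    have "\<forall>i\<in>F. u (e i) = 0"
    proof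
      fix i assume "i \<in> F"
      show "u (e i) = 0"
        by (rule li[unfolded lin_indep_over_def, rule_format, of F "\<lambda>i. u (e i)"])
           (use F1 s0 \<open>i \<in> F\<close> in \<open>auto\<close>)
    qed
    then show "u x = 0" using x eF by auto
  qed
  moreover have "vs.span ?B = UNIV" using sp vs_span_eq by simp
  moreover have "card ?B = p ^ n" using card_image[OF inj] by simp
  ultimately show ?thesis by blast
qed

lemma spanning_indep:
  assumes fin: "finite E" and sp: "vs.span E = UNIV" and c: "card E \<le> p ^ n"
  shows "vs.independent E \<and> card E = p ^ n"
proof -
  obtain Bas where Bas: "finite Bas" "vs.independent Bas" "vs.span Bas = UNIV" "card Bas = p ^ n"
    using basis_ex by blast
  interpret fd: finite_dimensional_vector_space "\<lambda>c x. s c * x" Bas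
    by unfold_locales (use Bas in auto)
  have "vs.independent E"
    by (rule fd.card_le_dim_spanning[of E UNIV]) (use fin sp c Bas in auto)
  moreover have "card Bas \<le> card E"
    using vs.independent_span_bound[OF fin Bas(2)] sp by auto
  ultimately show ?thesis using c Bas by auto
qed

lemma indep_coeffs:
  assumes ind: "vs.independent E" and F: "F \<subseteq> E" "finite F"
    and eq: "(\<Sum>x\<in>F. s (a x) * x) = (\<Sum>x\<in>F. s (b x) * x)" and x: "x \<in> F"
  shows "a x = b x"
proof -
  have sm: "(\<Sum>x\<in>F. s (a x - b x) * x) = 0"
    using eq by (simp add: s_diff left_diff_distrib sum_subtractf)
  have H: "\<And>u v. (\<Sum>x\<in>F. s (u x) * x) = 0 \<Longrightarrow> v \<in> F \<Longrightarrow> u v = 0"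
    using ind[unfolded vs.independent_explicit_finite_subsets] F by blast
  have "a x - b x = 0" using H[of "\<lambda>x. a x - b x" x, OF _ x] sm by simp
  then show ?thesis by simp
qed

lemma prim_iff: "x \<in> prim tp \<Delta> \<longleftrightarrow> \<Delta> x = tp x 1 + tp 1 x"
  by (simp add: prim_def)

lemma prim_add: "x \<in> prim tp \<Delta> \<Longrightarrow> y \<in> prim tp \<Delta> \<Longrightarrow> x + y \<in> prim tp \<Delta>"
  by (simp add: prim_def D_add tp_add1 tp_add2)

lemma prim_scal: "x \<in> prim tp \<Delta> \<Longrightarrow> s c * x \<in> prim tp \<Delta>"
  by (simp add: prim_def D_scal tp_scal1 tp_scal2 distrib_left)

lemma prim_zero: "0 \<in> prim tp \<Delta>"
proof -
  have "\<Delta> 0 = 0" using D_add[of 0 0] by simp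
  then show ?thesis by (simp add: prim_def tp_zero1 tp_zero2)
qed

lemma prim_sum: "(\<And>i. i \<in> F \<Longrightarrow> f i \<in> prim tp \<Delta>) \<Longrightarrow> sum f F \<in> prim tp \<Delta>"
  by (induction F rule: infinite_finite_induct) (auto intro: prim_add prim_zero)

lemma t_prim: "i < n \<Longrightarrow> t i \<in> prim tp \<Delta>"
proof -
  assume i: "i < n"
  have "span_over s UNIV (t ` {..<n}) = prim tp \<Delta>" using prim_basis unfolding basis_over_def by blast
  moreover have "t i \<in> span_over s UNIV (t ` {..<n})"
    unfolding span_over_def using i
    by (intro CollectI exI[of _ "{t i}"] exI[of _ "\<lambda>_. 1"]) (auto simp: s_one)
  ultimately show ?thesis by simp
qed

lemma prim_in_span_t: "x \<in> prim tp \<Delta> \<Longrightarrow> x \<in> vs.span (t ` {..<n})"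
  using prim_basis unfolding basis_over_def vs_span_eq by blast

lemma eps_prim: assumes "x \<in> prim tp \<Delta>" shows "\<epsilon> x = 0"
proof -
  obtain L where L: "klinear sh s L" "\<forall>x y. L (tp x y) = s (\<epsilon> x) * y" "\<forall>x. L (\<Delta> x) = x"
    using counit by blast
  have dx: "\<Delta> x = tp x 1 + tp 1 x" using assms by (simp add: prim_def)
  have "x = L (\<Delta> x)" using L(3) by simp
  also have "\<dots> = L (tp x 1 + tp 1 x)" by (simp only: dx)
  also have "\<dots> = L (tp x 1) + L (tp 1 x)" using L(1) unfolding klinear_def by blast
  also have "\<dots> = s (\<epsilon> x) + x" using L(2) by (simp add: e_one s_one)
  finally have "s (\<epsilon> x) = s 0" by (simp add: s_zero)
  then show ?thesis by (simp add: s_inj)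
qed

end




lemma mat_mult_idx:
  assumes "M1 \<in> carrier_mat n n" "M2 \<in> carrier_mat n n" "i < n" "j < n"
  shows "(M1 * M2) $$ (i, j) = (\<Sum>k<n. M1 $$ (i, k) * M2 $$ (k, j))"
  using assms by (simp add: index_mult_mat scalar_prod_def atLeast0LessThan)

lemma rspan_C_mono: assumes "C \<subseteq> C'" "x \<in> rspan sc C Y" shows "x \<in> rspan sc C' Y"
  using assms(2) by (induction x rule: rspan.induct) (use assms(1) in \<open>auto intro: rspan.intros\<close>)

locale hth = hctx s sh shh tp tp3 \<Delta> \<epsilon> S v p n t B
  for s :: "'k::field \<Rightarrow> 'h::comm_ring_1"
    and sh :: "'k \<Rightarrow> 'hh::comm_ring_1" and shh :: "'k \<Rightarrow> 'hhh::comm_ring_1"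
    and tp :: "'h \<Rightarrow> 'h \<Rightarrow> 'hh" and tp3 :: "'h \<Rightarrow> 'h \<Rightarrow> 'h \<Rightarrow> 'hhh"
    and \<Delta> :: "'h \<Rightarrow> 'hh" and \<epsilon> :: "'h \<Rightarrow> 'k" and S :: "'h \<Rightarrow> 'h"
    and v :: "'k \<Rightarrow> int" and p n :: nat and t :: "nat \<Rightarrow> 'h"
    and B :: "'k mat" +
  fixes A \<Theta> :: "'k mat"
  assumes Ac: "A \<in> carrier_mat n n" and AR: "entries_in (valuation_ring v) A"
    and ThGL: "GL_over UNIV n \<Theta>" and ThA: "\<Theta> * A = B * frob_mat p \<Theta>"
begin

abbreviation "u \<equiv> theta_elems s n \<Theta> t"

lemma Thc: "\<Theta> \<in> carrier_mat n n" using ThGL unfolding GL_over_def by blast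

lemma ARi: "i < n \<Longrightarrow> j < n \<Longrightarrow> A $$ (i, j) \<in> R"
  using AR Ac unfolding entries_in_def by auto

lemma u_def': "u i = (\<Sum>j<n. s (\<Theta> $$ (j, i)) * t j)"
  by (simp add: theta_elems_def)

lemma u_prim: "u i \<in> prim tp \<Delta>"
  unfolding u_def' by (rule prim_sum) (auto intro: prim_scal t_prim)

lemma u_pow: assumes i: "i < n" shows "u i ^ p = (\<Sum>j<n. s (A $$ (j, i)) * u j)"
proof -
  have "u i ^ p = (\<Sum>j<n. (s (\<Theta> $$ (j, i)) * t j) ^ p)"
    unfolding u_def' by (rule frob_sum[OF char_p(1) char_h])
  also have "\<dots> = (\<Sum>j<n. s (\<Theta> $$ (j, i) ^ p) * (\<Sum>k<n. s (B $$ (k, j)) * t k))"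
    by (rule sum.cong) (use Bp in \<open>auto simp: power_mult_distrib s_power\<close>)
  also have "\<dots> = (\<Sum>j<n. \<Sum>k<n. s (B $$ (k, j) * \<Theta> $$ (j, i) ^ p) * t k)"
    by (simp add: sum_distrib_left s_mult mult.assoc mult.commute mult.left_commute)
  also have "\<dots> = (\<Sum>k<n. \<Sum>j<n. s (B $$ (k, j) * \<Theta> $$ (j, i) ^ p) * t k)"
    by (rule sum.swap)
  also have "\<dots> = (\<Sum>k<n. s ((B * frob_mat p \<Theta>) $$ (k, i)) * t k)"
  proof (rule sum.cong[OF refl])
    fix k assume k: "k \<in> {..<n}"
    have fc: "frob_mat p \<Theta> \<in> carrier_mat n n" using Thc by (simp add: frob_mat_def)
    have "(B * frob_mat p \<Theta>) $$ (k, i) = (\<Sum>j<n. B $$ (k, j) * frob_mat p \<Theta> $$ (j, i))"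
      by (rule mat_mult_idx[OF Bc fc]) (use k i in auto)
    also have "\<dots> = (\<Sum>j<n. B $$ (k, j) * \<Theta> $$ (j, i) ^ p)"
      by (rule sum.cong) (use Thc i in \<open>auto simp: frob_mat_def\<close>)
    finally show "(\<Sum>j<n. s (B $$ (k, j) * \<Theta> $$ (j, i) ^ p) * t k) = s ((B * frob_mat p \<Theta>) $$ (k, i)) * t k"
      by (simp add: s_sum sum_distrib_right)
  qed
  also have "\<dots> = (\<Sum>k<n. s ((\<Theta> * A) $$ (k, i)) * t k)" by (simp add: ThA)
  also have "\<dots> = (\<Sum>k<n. \<Sum>l<n. s (A $$ (l, i)) * (s (\<Theta> $$ (k, l)) * t k))"
  proof (rule sum.cong[OF refl])
    fix k assume k: "k \<in> {..<n}"
    have "(\<Theta> * A) $$ (k, i) = (\<Sum>l<n. \<Theta> $$ (k, l) * A $$ (l, i))"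
      by (rule mat_mult_idx[OF Thc Ac]) (use k i in auto)
    then have "s ((\<Theta> * A) $$ (k, i)) * t k = (\<Sum>l<n. s (\<Theta> $$ (k, l) * A $$ (l, i)) * t k)"
      by (simp add: s_sum sum_distrib_right)
    also have "\<dots> = (\<Sum>l<n. s (A $$ (l, i)) * (s (\<Theta> $$ (k, l)) * t k))"
      by (simp add: s_mult mult_ac)
    finally show "s ((\<Theta> * A) $$ (k, i)) * t k = (\<Sum>l<n. s (A $$ (l, i)) * (s (\<Theta> $$ (k, l)) * t k))" .
  qed
  also have "\<dots> = (\<Sum>l<n. \<Sum>k<n. s (A $$ (l, i)) * (s (\<Theta> $$ (k, l)) * t k))"
    by (rule sum.swap)
  also have "\<dots> = (\<Sum>l<n. s (A $$ (l, i)) * u l)"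
    by (simp add: u_def' sum_distrib_left)
  finally show ?thesis .
qed

lemma t_in_span_u: assumes j: "j < n" shows "t j \<in> vs.span (u ` {..<n})"
proof -
  obtain N where N: "N \<in> carrier_mat n n" "\<Theta> * N = 1\<^sub>m n" using ThGL unfolding GL_over_def by blast
  have "(\<Sum>i<n. s (N $$ (i, j)) * u i) = (\<Sum>i<n. \<Sum>k<n. s (\<Theta> $$ (k, i) * N $$ (i, j)) * t k)"
    by (simp add: u_def' sum_distrib_left s_mult mult.assoc mult.commute mult.left_commute)
  also have "\<dots> = (\<Sum>k<n. \<Sum>i<n. s (\<Theta> $$ (k, i) * N $$ (i, j)) * t k)" by (rule sum.swap)
  also have "\<dots> = (\<Sum>k<n. s ((\<Theta> * N) $$ (k, j)) * t k)"
  proof (rule sum.cong[OF refl])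
    fix k assume k: "k \<in> {..<n}"
    have "(\<Theta> * N) $$ (k, j) = (\<Sum>i<n. \<Theta> $$ (k, i) * N $$ (i, j))"
      by (rule mat_mult_idx[OF Thc N(1)]) (use k j in auto)
    then show "(\<Sum>i<n. s (\<Theta> $$ (k, i) * N $$ (i, j)) * t k) = s ((\<Theta> * N) $$ (k, j)) * t k"
      by (simp add: s_sum sum_distrib_right)
  qed
  also have "\<dots> = (\<Sum>k<n. s (if k = j then 1 else 0) * t k)"
    by (rule sum.cong) (use N(2) j in auto)
  also have "\<dots> = (\<Sum>k<n. if k = j then t k else 0)"
    by (rule sum.cong) (auto simp: s_one s_zero)
  also have "\<dots> = t j" using j by simp
  finally have eq: "t j = (\<Sum>i<n. s (N $$ (i, j)) * u i)" ..
  show ?thesis unfolding eq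
    by (rule vs.span_sum) (auto intro: vs.span_scale vs.span_base)
qed

section \<open>Monomials\<close>

definition mono :: "(nat \<Rightarrow> nat) \<Rightarrow> 'h" where
  "mono \<beta> = (\<Prod>i<n. u i ^ \<beta> i)"

definition Red :: "(nat \<Rightarrow> nat) set" where
  "Red = PiE {..<n} (\<lambda>_. {..<p})"

definition E :: "'h set" where "E = mono ` Red"

definition deg :: "(nat \<Rightarrow> nat) \<Rightarrow> nat" where "deg \<beta> = (\<Sum>i<n. \<beta> i)"

lemma finite_Red: "finite Red" unfolding Red_def by (simp add: finite_PiE)
lemma card_Red: "card Red = p ^ n" unfolding Red_def by (simp add: card_PiE)
lemma finite_E: "finite E" unfolding E_def using finite_Red by simp
lemma card_E_le: "card E \<le> p ^ n" unfolding E_def using card_image_le[OF finite_Red] card_Red by simp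

lemma mono_split: assumes j: "j < n" shows "mono \<beta> = mono (\<beta>(j := 0)) * u j ^ \<beta> j"
proof -
  have "mono \<beta> = u j ^ \<beta> j * (\<Prod>i\<in>{..<n} - {j}. u i ^ \<beta> i)"
    unfolding mono_def using j by (simp add: prod.remove)
  moreover have "mono (\<beta>(j := 0)) = (\<Prod>i\<in>{..<n} - {j}. u i ^ \<beta> i)"
    unfolding mono_def using j by (simp add: prod.remove)
  ultimately show ?thesis by (simp add: mult.commute)
qed

lemma mono_cong: "(\<And>i. i < n \<Longrightarrow> \<beta> i = \<gamma> i) \<Longrightarrow> mono \<beta> = mono \<gamma>"
  unfolding mono_def by (rule prod.cong) auto

lemma deg_split: assumes j: "j < n" shows "deg \<beta> = deg (\<beta>(j := 0)) + \<beta> j"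
proof -
  have "deg \<beta> = \<beta> j + (\<Sum>i\<in>{..<n} - {j}. \<beta> i)"
    unfolding deg_def using j by (simp add: sum.remove)
  moreover have "deg (\<beta>(j := 0)) = (\<Sum>i\<in>{..<n} - {j}. \<beta> i)"
    unfolding deg_def using j by (simp add: sum.remove)
  ultimately show ?thesis by simp
qed

definition z0 :: "nat \<Rightarrow> nat" where "z0 = restrict (\<lambda>_. 0) {..<n}"
definition ind :: "nat \<Rightarrow> nat \<Rightarrow> nat" where "ind j = restrict (\<lambda>i. if i = j then 1 else 0) {..<n}"

lemma z0_Red: "z0 \<in> Red" unfolding z0_def Red_def using p_ge2 by auto
lemma mono_z0: "mono z0 = 1" unfolding mono_def z0_def by simp
lemma ind_Red: "ind j \<in> Red" unfolding ind_def Red_def using p_ge2 by auto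
lemma mono_ind: assumes "j < n" shows "mono (ind j) = u j"
proof -
  have "mono (ind j) = (\<Prod>i<n. if i = j then u i else 1)"
    unfolding mono_def ind_def by (rule prod.cong) auto
  also have "\<dots> = u j" using assms by (simp add: prod.delta)
  finally show ?thesis .
qed

lemma one_E: "1 \<in> E" unfolding E_def using z0_Red mono_z0 by force
lemma u_E: assumes "j < n" shows "u j \<in> E"
  unfolding E_def using mono_ind[OF assms] ind_Red[of j] by (metis image_eqI)

lemma rspanR_gen1: "y \<in> Y \<Longrightarrow> y \<in> rspan s R Y" using rspan_gen1[OF s_am subrR] .
lemma rspanR_scal: "c \<in> R \<Longrightarrow> x \<in> rspan s R Y \<Longrightarrow> s c * x \<in> rspan s R Y"
  using rspan_scal[OF s_am subrR] .
lemma rspanR_sum: "(\<And>i. i \<in> F \<Longrightarrow> f i \<in> rspan s R Y) \<Longrightarrow> sum f F \<in> rspan s R Y"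
  using rspan_sum[OF s_am subrR] .

lemma red_step:
  assumes "\<beta> \<in> Red" "j < n"
  shows "mono \<beta> * u j \<in> rspan s R E"
  using assms
proof (induction "deg \<beta>" arbitrary: \<beta> j rule: less_induct)
  case less
  have bj: "\<beta> j < p" using less.prems unfolding Red_def by auto
  show ?case
  proof (cases "\<beta> j + 1 < p")
    case True
    let ?b = "\<beta>(j := \<beta> j + 1)"
    have "?b \<in> Red" using less.prems True unfolding Red_def by (auto simp: PiE_iff extensional_def)
    moreover have "mono ?b = mono \<beta> * u j"
      using mono_split[OF less.prems(2), of ?b] mono_split[OF less.prems(2), of \<beta>] by simp
    ultimately show ?thesis unfolding E_def by (metis image_eqI rspanR_gen1)
  next
    case False
    then have bj': "\<beta> j = p - 1" using bj by simp
    let ?b = "\<beta>(j := 0)"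
    have b0: "?b \<in> Red" using less.prems p_ge2 unfolding Red_def by (auto simp: PiE_iff extensional_def)
    have dlt: "deg ?b < deg \<beta>" using deg_split[OF less.prems(2), of \<beta>] bj' p_ge2 by simp
    have "mono \<beta> * u j = mono ?b * u j ^ p"
      using mono_split[OF less.prems(2), of \<beta>] bj' p_ge2
      by (simp add: mult.assoc power_Suc2[symmetric])
    also have "\<dots> = (\<Sum>k<n. s (A $$ (k, j)) * (mono ?b * u k))"
      by (simp add: u_pow[OF less.prems(2)] sum_distrib_left mult.left_commute)
    finally have eq: "mono \<beta> * u j = (\<Sum>k<n. s (A $$ (k, j)) * (mono ?b * u k))" .
    show ?thesis unfolding eq
      by (rule rspanR_sum, rule rspanR_scal) (use ARi less.prems(2) less.hyps[OF dlt b0] in auto)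
  qed
qed

inductive monoset :: "nat \<Rightarrow> 'h \<Rightarrow> bool" where
  m0: "monoset 0 1"
| mS: "monoset d x \<Longrightarrow> i < n \<Longrightarrow> monoset (Suc d) (x * u i)"

lemma monoset_pow: "monoset d x \<Longrightarrow> i < n \<Longrightarrow> monoset (d + m) (x * u i ^ m)"
proof (induction m)
  case 0 then show ?case by simp
next
  case (Suc m)
  then have "monoset (Suc (d + m)) (x * u i ^ m * u i)" by (intro monoset.mS) auto
  moreover have "x * u i ^ Suc m = x * u i ^ m * u i" by (simp only: power_Suc2 mult.assoc)
  ultimately show ?case by (simp only: add_Suc_right)
qed

lemma mono_monoset: "monoset (deg \<beta>) (mono \<beta>)"
proof -
  have "k \<le> n \<Longrightarrow> monoset (\<Sum>i<k. \<beta> i) (\<Prod>i<k. u i ^ \<beta> i)" for k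
  proof (induction k)
    case 0 then show ?case by (simp add: monoset.m0)
  next
    case (Suc k)
    then show ?case using monoset_pow[of "\<Sum>i<k. \<beta> i" "\<Prod>i<k. u i ^ \<beta> i" k "\<beta> k"] by simp
  qed
  then show ?thesis unfolding deg_def mono_def by simp
qed

lemma rspanE_mult_u: "x \<in> rspan s R E \<Longrightarrow> j < n \<Longrightarrow> x * u j \<in> rspan s R E"
  by (rule rspan_mult_right[OF s_am subrR]) (auto simp: E_def intro: red_step[unfolded E_def])

lemma rspanE_mult_monoset: "monoset d w \<Longrightarrow> x \<in> rspan s R E \<Longrightarrow> x * w \<in> rspan s R E"
proof (induction arbitrary: x rule: monoset.induct)
  case m0 then show ?case by simp
next
  case (mS d w i)
  then show ?case using rspanE_mult_u[of "x * w" i] by (simp add: mult.assoc)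
qed

lemma rspanE_mult: "x \<in> rspan s R E \<Longrightarrow> y \<in> rspan s R E \<Longrightarrow> x * y \<in> rspan s R E"
proof (rule rspan_mult_closed[OF s_am subrR])
  fix a b assume a: "a \<in> E" and b: "b \<in> E"
  then obtain \<beta> where "b = mono \<beta>" unfolding E_def by auto
  then show "a * b \<in> rspan s R E" using rspanE_mult_monoset[OF mono_monoset rspanR_gen1[OF a]] by simp
qed

abbreviation "X \<equiv> gen_alg s R (u ` {..<n})"

lemma one_X: "1 \<in> X" using gen_alg.scal[of 1 R s "u ` {..<n}"] R_1[OF dvr] s_one by simp

lemma monoset_X: "monoset d x \<Longrightarrow> x \<in> X"
  by (induction rule: monoset.induct) (auto intro: gen_alg.intros one_X)

lemma s_X: "c \<in> R \<Longrightarrow> s c \<in> X" by (rule gen_alg.scal)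

lemma X_eq: "X = rspan s R E"
proof
  show "X \<subseteq> rspan s R E"
  proof (rule gen_alg_min)
    fix c assume "c \<in> R"
    then show "s c \<in> rspan s R E" using rspanR_scal[of c 1 E] rspanR_gen1[OF one_E] by simp
  next
    show "u ` {..<n} \<subseteq> rspan s R E" using u_E rspanR_gen1 by auto
  qed (auto intro: rspan.add rspanE_mult)
  show "rspan s R E \<subseteq> X"
  proof
    fix x assume "x \<in> rspan s R E"
    then show "x \<in> X"
    proof (induction x rule: rspan.induct)
      case zero then show ?case using s_X[of 0] R_0[OF dvr] by (simp add: s_zero)
    next
      case (gen c y)
      then obtain \<beta> where "y = mono \<beta>" unfolding E_def by auto
      then have "y \<in> X" using monoset_X[OF mono_monoset] by simp
      then show ?case using gen s_X by (auto intro: gen_alg.mult)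
    next
      case (add x y) then show ?case by (blast intro: gen_alg.add)
    qed
  qed
qed

lemma E_span: "vs.span E = UNIV"
proof -
  have sp_mult: "x * y \<in> vs.span E" if "x \<in> vs.span E" "y \<in> vs.span E" for x y
  proof -
    have "x * y \<in> rspan s UNIV E"
    proof (rule rspan_mult_closed[OF s_am subr_UNIV])
      fix a b assume "a \<in> E" "b \<in> E"
      then have "a * b \<in> rspan s R E" by (intro rspanE_mult rspanR_gen1)
      then show "a * b \<in> rspan s UNIV E" by (rule rspan_C_mono[rotated]) auto
    qed (use that rspan_UNIV_eq in auto)
    then show ?thesis using rspan_UNIV_eq by simp
  qed
  have uE: "u ` {..<n} \<subseteq> E" using u_E by auto
  have tsp: "t ` {..<n} \<subseteq> vs.span E"
    using t_in_span_u vs.span_mono[OF uE] by auto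
  have "UNIV \<subseteq> vs.span E"
    unfolding prim_gen[symmetric]
  proof (rule gen_alg_min)
    fix c :: 'k
    show "s c \<in> vs.span E" using vs.span_scale[OF vs.span_base[OF one_E], of c] by simp
  next
    show "prim tp \<Delta> \<subseteq> vs.span E"
      using prim_in_span_t vs.span_mono[OF tsp] vs.span_span by blast
  qed (auto intro: vs.span_add sp_mult)
  then show ?thesis by auto
qed

lemma E_indep: "vs.independent E" and card_E: "card E = p ^ n"
  using spanning_indep[OF finite_E E_span card_E_le] by auto

lemma mono_inj: "inj_on mono Red"
  by (rule eq_card_imp_inj_on[OF finite_Red]) (use card_E card_Red in \<open>simp add: E_def\<close>)

lemma u_inj: "inj_on u {..<n}"
proof
  fix i j assume ij: "i \<in> {..<n}" "j \<in> {..<n}" "u i = u j"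
  then have "mono (ind i) = mono (ind j)" using mono_ind by simp
  then have "ind i = ind j" using mono_inj ind_Red unfolding inj_on_def by blast
  then have "ind i i = ind j i" by simp
  then show "i = j" using ij unfolding ind_def by (auto split: if_splits)
qed

end




context hth
begin

lemma X_add: "x \<in> X \<Longrightarrow> y \<in> X \<Longrightarrow> x + y \<in> X" by (rule gen_alg.add)
lemma X_mult: "x \<in> X \<Longrightarrow> y \<in> X \<Longrightarrow> x * y \<in> X" by (rule gen_alg.mult)
lemma X_scal: "c \<in> R \<Longrightarrow> x \<in> X \<Longrightarrow> s c * x \<in> X" by (intro X_mult s_X)
lemma X_diff: "x \<in> X \<Longrightarrow> y \<in> X \<Longrightarrow> x - y \<in> X"
  using X_add[OF _ X_scal[OF R_uminus'[OF R_1[OF dvr]]], of x y] by (simp add: s_uminus s_one)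
lemma u_X: "i < n \<Longrightarrow> u i \<in> X" by (rule gen_alg.gen) auto
lemma E_X: "E \<subseteq> X" using X_eq rspanR_gen1 by blast

lemma X_basis: "\<exists>(m::nat) e. basis_over s R e {..<m} X"
proof -
  obtain e where e: "bij_betw e {0..<card E} E" using ex_bij_betw_nat_finite[OF finite_E] by blast
  let ?m = "card E"
  have inj: "inj_on e {..<?m}" using e by (simp add: bij_betw_def atLeast0LessThan)
  have img: "e ` {..<?m} = E" using e by (simp add: bij_betw_def atLeast0LessThan)
  have li: "lin_indep_over s R e {..<?m}"
    unfolding lin_indep_over_def
  proof (intro allI impI ballI)
    fix F c i assume H: "finite F \<and> F \<subseteq> {..<?m} \<and> (\<forall>i\<in>F. c i \<in> R) \<and> (\<Sum>i\<in>F. s (c i) * e i) = 0"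
      and i: "i \<in> F"
    have injF: "inj_on e F" using inj H by (meson inj_on_subset)
    define w where "w y = c (the_inv_into F e y)" for y
    have "(\<Sum>y\<in>e ` F. s (w y) * y) = (\<Sum>j\<in>F. s (w (e j)) * e j)"
      by (simp add: sum.reindex[OF injF])
    also have "\<dots> = (\<Sum>j\<in>F. s (c j) * e j)"
      by (rule sum.cong) (auto simp: w_def the_inv_into_f_f[OF injF])
    finally have s0: "(\<Sum>y\<in>e ` F. s (w y) * y) = (\<Sum>y\<in>e ` F. s ((\<lambda>_. 0) y) * y)"
      using H by (simp add: s_zero)
    have "e ` F \<subseteq> E" using H img by auto
    then have "w (e i) = 0"
      by (rule indep_coeffs[OF E_indep _ _ s0]) (use H i in auto)
    then show "c i = 0" by (simp add: w_def the_inv_into_f_f[OF injF i])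
  qed
  have "span_over s R (e ` {..<?m}) = X"
    using img X_eq rspan_eq_span_over[OF s_am subrR] by simp
  then have "basis_over s R e {..<?m} X" using inj li unfolding basis_over_def by simp
  then show ?thesis by blast
qed

abbreviation "GX \<equiv> {tp a b | a b. a \<in> X \<and> b \<in> X}"

lemma rspanH_gen1: "y \<in> Y \<Longrightarrow> y \<in> rspan sh R Y" using rspan_gen1[OF sh_am subrR] .

lemma D_s: "\<Delta> (s c) = sh c"
  using D_scal[of c 1] by (simp add: D_one)

lemma D_X: "x \<in> X \<Longrightarrow> \<Delta> x \<in> rspan sh R GX"
proof -
  have "X \<subseteq> {x. \<Delta> x \<in> rspan sh R GX}"
  proof (rule gen_alg_min)
    fix c assume c: "c \<in> R"
    have "tp 1 1 \<in> GX" using one_X by blast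
    then have "sh c * tp 1 1 \<in> rspan sh R GX" by (rule rspan.gen[OF c])
    then show "s c \<in> {x. \<Delta> x \<in> rspan sh R GX}" by (simp add: D_s tp_one)
  next
    show "u ` {..<n} \<subseteq> {x. \<Delta> x \<in> rspan sh R GX}"
    proof
      fix y assume "y \<in> u ` {..<n}"
      then obtain i where i: "i < n" "y = u i" by auto
      have "\<Delta> y = tp y 1 + tp 1 y" using u_prim i by (simp add: prim_def)
      moreover have "tp y 1 \<in> GX" "tp 1 y \<in> GX" using u_X i one_X by blast+
      ultimately show "y \<in> {x. \<Delta> x \<in> rspan sh R GX}"
        by (auto intro: rspan.add rspanH_gen1)
    qed
  next
    fix x y assume "x \<in> {x. \<Delta> x \<in> rspan sh R GX}" "y \<in> {x. \<Delta> x \<in> rspan sh R GX}"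
    then show "x + y \<in> {x. \<Delta> x \<in> rspan sh R GX}" by (auto simp: D_add intro: rspan.add)
  next
    fix x y assume x: "x \<in> {x. \<Delta> x \<in> rspan sh R GX}" and y: "y \<in> {x. \<Delta> x \<in> rspan sh R GX}"
    have "\<Delta> x * \<Delta> y \<in> rspan sh R GX"
    proof (rule rspan_mult_closed[OF sh_am subrR])
      fix g g' assume "g \<in> GX" "g' \<in> GX"
      then obtain a b a' b' where "g = tp a b" "g' = tp a' b'" "a \<in> X" "b \<in> X" "a' \<in> X" "b' \<in> X"
        by blast
      then show "g * g' \<in> rspan sh R GX"
        by (auto simp: tp_mult intro!: rspanH_gen1 X_mult)
    qed (use x y in auto)
    then show "x * y \<in> {x. \<Delta> x \<in> rspan sh R GX}" by (simp add: D_mult)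
  qed
  then show "x \<in> X \<Longrightarrow> \<Delta> x \<in> rspan sh R GX" by blast
qed

lemma eps_X: "x \<in> X \<Longrightarrow> \<epsilon> x \<in> R"
proof -
  have "X \<subseteq> {x. \<epsilon> x \<in> R}"
  proof (rule gen_alg_min)
    fix c assume "c \<in> R"
    then show "s c \<in> {x. \<epsilon> x \<in> R}" using e_scal[of c 1] by (simp add: e_one)
  next
    show "u ` {..<n} \<subseteq> {x. \<epsilon> x \<in> R}" using eps_prim[OF u_prim] R_0[OF dvr] by auto
  qed (auto simp: e_add e_mult intro: R_add' R_mult')
  then show "x \<in> X \<Longrightarrow> \<epsilon> x \<in> R" by blast
qed

section \<open>Antipode\<close>

definition GD :: "nat \<Rightarrow> 'hh set" where
  "GD d = {tp a b | a b. (\<exists>k<d. monoset k a) \<and> b \<in> X}"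

lemma D_decomp: "monoset d x \<Longrightarrow> \<Delta> x - tp x 1 \<in> rspan sh R (GD d)"
proof (induction rule: monoset.induct)
  case m0
  then show ?case by (simp add: D_one tp_one rspan.zero)
next
  case (mS d x i)
  define z where "z = \<Delta> x - tp x 1"
  have Dx: "\<Delta> x = tp x 1 + z" unfolding z_def by simp
  have Du: "\<Delta> (u i) = tp (u i) 1 + tp 1 (u i)" using u_prim by (simp add: prim_def)
  have "\<Delta> (x * u i) - tp (x * u i) 1 = tp x (u i) + z * tp (u i) 1 + z * tp 1 (u i)"
    unfolding D_mult Dx Du by (simp add: algebra_simps tp_mult)
  moreover have "tp x (u i) \<in> rspan sh R (GD (Suc d))"
    using mS u_X unfolding GD_def by (intro rspanH_gen1) blast
  moreover have "z * tp (u i) 1 \<in> rspan sh R (GD (Suc d))"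
  proof (rule rspan_mult_right[OF sh_am subrR _ mS.IH[folded z_def]])
    fix g assume "g \<in> GD d"
    then obtain a b k where "g = tp a b" "k < d" "monoset k a" "b \<in> X" unfolding GD_def by blast
    then have "g * tp (u i) 1 = tp (a * u i) b" "monoset (Suc k) (a * u i)" "Suc k < Suc d"
      using mS by (auto simp: tp_mult intro: monoset.mS)
    then show "g * tp (u i) 1 \<in> rspan sh R (GD (Suc d))"
      using \<open>b \<in> X\<close> unfolding GD_def by (intro rspanH_gen1) blast
  qed
  moreover have "z * tp 1 (u i) \<in> rspan sh R (GD (Suc d))"
  proof (rule rspan_mult_right[OF sh_am subrR _ mS.IH[folded z_def]])
    fix g assume "g \<in> GD d"
    then obtain a b k where "g = tp a b" "k < d" "monoset k a" "b \<in> X" unfolding GD_def by blast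
    then have "g * tp 1 (u i) = tp a (b * u i)" "b * u i \<in> X" "k < Suc d"
      using mS by (auto simp: tp_mult intro: X_mult u_X)
    then show "g * tp 1 (u i) \<in> rspan sh R (GD (Suc d))"
      using \<open>monoset k a\<close> unfolding GD_def by (intro rspanH_gen1) blast
  qed
  ultimately show ?case by (auto intro: rspan.add)
qed

lemma S_monoset: "monoset d x \<Longrightarrow> S x \<in> X"
proof (induction d arbitrary: x rule: less_induct)
  case (less d)
  obtain L where L: "klinear sh s L" "\<forall>x y. L (tp x y) = S x * y" "\<forall>x. L (\<Delta> x) = s (\<epsilon> x)"
    using antipode by blast
  have Ladd: "L (a + b) = L a + L b" for a b using L(1) unfolding klinear_def by blast
  have Lsc: "L (sh c * a) = s c * L a" for c a using L(1) unfolding klinear_def by blast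
  have L0: "L 0 = 0" using Ladd[of 0 0] by simp
  define z where "z = \<Delta> x - tp x 1"
  have zr: "z \<in> rspan sh R (GD d)" unfolding z_def by (rule D_decomp[OF less.prems])
  have Lz: "L z \<in> X" using zr
  proof (induction z rule: rspan.induct)
    case zero then show ?case using L0 s_X[of 0] R_0[OF dvr] by (simp add: s_zero)
  next
    case (gen c g)
    then obtain a b k where "g = tp a b" "k < d" "monoset k a" "b \<in> X" unfolding GD_def by blast
    then have "L (sh c * g) = s c * (S a * b)" "S a \<in> X" using Lsc L(2) less.IH by auto
    then show ?case using X_scal[OF gen(1) X_mult[OF \<open>S a \<in> X\<close> \<open>b \<in> X\<close>]] by simp
  next
    case (add a b) then show ?case by (simp add: Ladd X_add)
  qed
  have "S x = L (tp x 1)" using L(2) by simp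
  also have "\<dots> = L (\<Delta> x) - L z" using Ladd[of "tp x 1" z] unfolding z_def by simp
  also have "\<dots> = s (\<epsilon> x) - L z" using L(3) by simp
  finally show ?case using X_diff[OF s_X[OF eps_X[OF monoset_X[OF less.prems]]] Lz] by simp
qed

lemma S_X: "x \<in> X \<Longrightarrow> S x \<in> X"
proof -
  assume "x \<in> X"
  then have "x \<in> rspan s R E" using X_eq by simp
  then show "S x \<in> X"
  proof (induction x rule: rspan.induct)
    case zero then show ?case using s_X[of 0] R_0[OF dvr] by (simp add: s_zero S_zero)
  next
    case (gen c y)
    then obtain \<beta> where "y = mono \<beta>" unfolding E_def by auto
    then have "S y \<in> X" using S_monoset[OF mono_monoset] by simp
    then show ?case using gen by (simp add: S_scal X_scal)
  next
    case (add a b) then show ?case by (simp add: S_add X_add)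
  qed
qed

lemma X_hopf_order: "hopf_order s sh tp \<Delta> \<epsilon> S R X"
  unfolding hopf_order_def
proof (intro conjI ballI)
  show "1 \<in> X" by (rule one_X)
  show "\<exists>(m::nat) e. basis_over s R e {..<m} X" by (rule X_basis)
  have "vs.span E \<subseteq> vs.span X" by (rule vs.span_mono[OF E_X])
  then show "span_over s UNIV X = UNIV" using E_span vs_span_eq by auto
next
  fix x y assume "x \<in> X" "y \<in> X"
  then show "x + y \<in> X" "x * y \<in> X" by (auto intro: X_add X_mult)
next
  fix r x assume "r \<in> R" "x \<in> X"
  then show "s r * x \<in> X" by (rule X_scal)
next
  fix x assume x: "x \<in> X"
  show "\<Delta> x \<in> span_over sh R GX" using D_X[OF x] rspan_eq_span_over[OF sh_am subrR] by simp
  show "\<epsilon> x \<in> R" using eps_X[OF x] .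
  show "S x \<in> X" using S_X[OF x] .
qed

lemma coords_R:
  assumes x: "x \<in> X" and xe: "x = (\<Sum>k<n. s (c k) * u k)" and k: "k < n"
  shows "c k \<in> R"
proof -
  have "x \<in> span_over s R E" using x X_eq rspan_eq_span_over[OF s_am subrR] by simp
  then obtain F d where F: "finite F" "F \<subseteq> E" "\<forall>y\<in>F. d y \<in> R" "x = (\<Sum>y\<in>F. s (d y) * y)"
    unfolding span_over_def by blast
  let ?U = "u ` {..<n}"
  have UE: "?U \<subseteq> E" using u_E by auto
  define iv where "iv y = the_inv_into {..<n} u y" for y
  define c' where "c' y = (if y \<in> ?U then c (iv y) else 0)" for y
  define d' where "d' y = (if y \<in> F then d y else 0)" for y
  let ?G = "F \<union> ?U"
  have "x = (\<Sum>y\<in>?U. s (c (iv y)) * y)"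
    unfolding xe iv_def by (simp add: sum.reindex[OF u_inj] the_inv_into_f_f[OF u_inj])
  also have "\<dots> = (\<Sum>y\<in>?G. s (c' y) * y)"
    using F(1) by (intro sum.mono_neutral_cong_left) (auto simp: c'_def s_zero)
  finally have x1: "x = (\<Sum>y\<in>?G. s (c' y) * y)" .
  have x2: "x = (\<Sum>y\<in>?G. s (d' y) * y)"
    unfolding F(4) using F(1) by (intro sum.mono_neutral_cong_left) (auto simp: d'_def s_zero)
  have "d' (u k) = c' (u k)"
    by (rule indep_coeffs[OF E_indep, of ?G]) (use F UE x1 x2 k in auto)
  moreover have "c' (u k) = c k" using k unfolding c'_def iv_def by (simp add: the_inv_into_f_f[OF u_inj])
  moreover have "d' (u k) \<in> R" using F(3) R_0[OF dvr] unfolding d'_def by auto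
  ultimately show ?thesis by simp
qed

end




section \<open>Evaluation of polynomials\<close>

definition mon :: "(nat \<Rightarrow> 'a::comm_ring_1) \<Rightarrow> (nat \<Rightarrow>\<^sub>0 nat) \<Rightarrow> 'a" where
  "mon x m = (\<Prod>i\<in>Poly_Mapping.keys m. x i ^ Poly_Mapping.lookup m i)"

lemma eval_mon: "eval_mpoly sc x P = (\<Sum>m\<in>Poly_Mapping.keys P. sc (Poly_Mapping.lookup P m) * mon x m)"
  unfolding eval_mpoly_def mon_def ..

lemma mon_superset:
  assumes "finite K" "Poly_Mapping.keys m \<subseteq> K"
  shows "mon x m = (\<Prod>i\<in>K. x i ^ Poly_Mapping.lookup m i)"
  unfolding mon_def using assms
  by (intro prod.mono_neutral_left) (auto simp: in_keys_iff)

lemma mon_add: "mon x (a + b) = mon x a * mon x b"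
proof -
  let ?K = "Poly_Mapping.keys a \<union> Poly_Mapping.keys b"
  have "mon x (a + b) = (\<Prod>i\<in>?K. x i ^ Poly_Mapping.lookup (a + b) i)"
    by (rule mon_superset) (auto simp: keys_add)
  also have "\<dots> = (\<Prod>i\<in>?K. x i ^ Poly_Mapping.lookup a i) * (\<Prod>i\<in>?K. x i ^ Poly_Mapping.lookup b i)"
    by (simp add: lookup_add power_add prod.distrib)
  also have "\<dots> = mon x a * mon x b"
    by (simp add: mon_superset[symmetric])
  finally show ?thesis .
qed

lemma mon_zero: "mon x 0 = 1" by (simp add: mon_def)

lemma mon_single: "mon x (Poly_Mapping.single i k) = x i ^ k"
  by (simp add: mon_def)

lemma update_eq_add: "k \<notin> Poly_Mapping.keys f \<Longrightarrow> Poly_Mapping.update k b f = f + Poly_Mapping.single k b"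
  by (rule poly_mapping_eqI) (auto simp: lookup_update lookup_add lookup_single in_keys_iff when_def)

context
  fixes sc :: "'k::field \<Rightarrow> 'a::comm_ring_1"
  assumes am: "alg_map sc"
begin

lemma eval_superset:
  assumes "finite K" "Poly_Mapping.keys P \<subseteq> K"
  shows "eval_mpoly sc x P = (\<Sum>m\<in>K. sc (Poly_Mapping.lookup P m) * mon x m)"
  unfolding eval_mon using assms
  by (intro sum.mono_neutral_left) (auto simp: in_keys_iff am_zero[OF am])

lemma eval_add: "eval_mpoly sc x (P + Q) = eval_mpoly sc x P + eval_mpoly sc x Q"
proof -
  let ?K = "Poly_Mapping.keys P \<union> Poly_Mapping.keys Q"
  have "eval_mpoly sc x (P + Q) = (\<Sum>m\<in>?K. sc (Poly_Mapping.lookup (P + Q) m) * mon x m)"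
    by (rule eval_superset) (auto simp: keys_add)
  also have "\<dots> = (\<Sum>m\<in>?K. sc (Poly_Mapping.lookup P m) * mon x m) + (\<Sum>m\<in>?K. sc (Poly_Mapping.lookup Q m) * mon x m)"
    by (simp add: lookup_add am_add[OF am] distrib_right sum.distrib)
  also have "\<dots> = eval_mpoly sc x P + eval_mpoly sc x Q"
    by (simp add: eval_superset[symmetric])
  finally show ?thesis .
qed

lemma eval_zero: "eval_mpoly sc x 0 = 0" by (simp add: eval_mpoly_def)

lemma eval_single: "eval_mpoly sc x (Poly_Mapping.single m c) = sc c * mon x m"
  by (cases "c = 0") (simp_all add: eval_mon am_zero[OF am])

lemma eval_single_mult:
  "eval_mpoly sc x (Poly_Mapping.single a b * Q) = sc b * mon x a * eval_mpoly sc x Q"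
proof (induction Q rule: update_induct)
  case const
  then show ?case by (simp add: eval_zero)
next
  case (update f c d)
  then show ?case
    by (simp add: update_eq_add distrib_left mult_single eval_add eval_single am_mult[OF am] mon_add
        algebra_simps)
qed

lemma eval_mult: "eval_mpoly sc x (P * Q) = eval_mpoly sc x P * eval_mpoly sc x Q"
proof (induction P rule: update_induct)
  case const
  then show ?case by (simp add: eval_zero)
next
  case (update f a b)
  have "eval_mpoly sc x (Poly_Mapping.update a b f * Q) = eval_mpoly sc x (f * Q) + eval_mpoly sc x (Poly_Mapping.single a b * Q)"
    by (simp only: update_eq_add[OF update.hyps(1)] distrib_right eval_add)
  also have "\<dots> = (eval_mpoly sc x f + eval_mpoly sc x (Poly_Mapping.single a b)) * eval_mpoly sc x Q"
    by (simp only: update.IH eval_single_mult eval_single distrib_right)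
  also have "\<dots> = eval_mpoly sc x (Poly_Mapping.update a b f) * eval_mpoly sc x Q"
    by (simp only: update_eq_add[OF update.hyps(1)] eval_add)
  finally show ?case .
qed

lemma eval_one: "eval_mpoly sc x 1 = 1"
  using eval_single[of x 0 1] by (simp add: am_one[OF am] mon_zero)

lemma eval_uminus: "eval_mpoly sc x (- P) = - eval_mpoly sc x P"
  using eval_add[of x P "-P"] eval_zero[of x] minus_unique[of "eval_mpoly sc x P"] by simp

lemma eval_diff: "eval_mpoly sc x (P - Q) = eval_mpoly sc x P - eval_mpoly sc x Q"
  using eval_add[of x P "-Q"] eval_uminus[of x Q] by simp

lemma eval_sum: "eval_mpoly sc x (sum f F) = (\<Sum>i\<in>F. eval_mpoly sc x (f i))"
  by (induction F rule: infinite_finite_induct) (auto simp: eval_zero eval_add)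

lemma eval_power: "eval_mpoly sc x (P ^ k) = eval_mpoly sc x P ^ k"
  by (induction k) (auto simp: eval_one eval_mult)

lemma eval_var: "eval_mpoly sc x (var i) = x i"
  unfolding var_def by (simp add: eval_single am_one[OF am] mon_single)

lemma eval_const: "eval_mpoly sc x (const c) = sc c"
  unfolding const_def by (simp add: eval_single mon_zero)

end

context
  fixes C :: "'k::comm_ring_1 set" and n :: nat
  assumes sr: "subr C" and neg: "\<forall>x\<in>C. - x \<in> C"
begin

lemma polys_iff: "P \<in> polys_over C n \<longleftrightarrow>
   (\<forall>m. Poly_Mapping.lookup P m \<in> C) \<and> (\<forall>m\<in>Poly_Mapping.keys P. Poly_Mapping.keys m \<subseteq> {..<n})"
  by (simp add: polys_over_def)

lemma polys_zero: "0 \<in> polys_over C n"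
  using sr by (simp add: polys_iff subr_def)

lemma polys_add: assumes "P \<in> polys_over C n" "Q \<in> polys_over C n" shows "P + Q \<in> polys_over C n"
  unfolding polys_iff
proof (intro conjI allI ballI)
  fix m show "Poly_Mapping.lookup (P + Q) m \<in> C"
    using assms sr unfolding polys_iff subr_def by (simp add: lookup_add)
next
  fix m assume "m \<in> Poly_Mapping.keys (P + Q)"
  then have "m \<in> Poly_Mapping.keys P \<or> m \<in> Poly_Mapping.keys Q" using keys_add[of P Q] by blast
  then show "Poly_Mapping.keys m \<subseteq> {..<n}" using assms unfolding polys_iff by blast
qed

lemma polys_single: "c \<in> C \<Longrightarrow> Poly_Mapping.keys m \<subseteq> {..<n} \<Longrightarrow> Poly_Mapping.single m c \<in> polys_over C n"
  using sr unfolding polys_iff subr_def by (auto simp: lookup_single when_def)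

lemma polys_update_split:
  assumes "Poly_Mapping.update a b f \<in> polys_over C n" "a \<notin> Poly_Mapping.keys f" "b \<noteq> 0"
  shows "f \<in> polys_over C n" "Poly_Mapping.single a b \<in> polys_over C n"
proof -
  have l: "Poly_Mapping.lookup (Poly_Mapping.update a b f) m = (if a = m then b else Poly_Mapping.lookup f m)" for m
    by (simp add: lookup_update)
  have k: "Poly_Mapping.keys (Poly_Mapping.update a b f) = insert a (Poly_Mapping.keys f)"
    using assms(3) by (simp add: keys_update)
  show "f \<in> polys_over C n"
    unfolding polys_iff
  proof (intro conjI allI ballI)
    fix m show "Poly_Mapping.lookup f m \<in> C"
      using assms(1,2) l[of m] sr unfolding polys_iff subr_def by (metis in_keys_iff)
  next
    fix m assume "m \<in> Poly_Mapping.keys f"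
    then show "Poly_Mapping.keys m \<subseteq> {..<n}" using assms(1) k unfolding polys_iff by auto
  qed
  have "b \<in> C" using assms(1) l[of a] unfolding polys_iff by metis
  moreover have "Poly_Mapping.keys a \<subseteq> {..<n}" using assms(1) k unfolding polys_iff by auto
  ultimately show "Poly_Mapping.single a b \<in> polys_over C n" by (rule polys_single)
qed

lemma polys_mult_single:
  assumes "Poly_Mapping.single a b \<in> polys_over C n" "Q \<in> polys_over C n"
  shows "Poly_Mapping.single a b * Q \<in> polys_over C n"
  using assms(2)
proof (induction Q rule: update_induct)
  case const then show ?case by (simp add: polys_zero)
next
  case (update f c d)
  have f: "f \<in> polys_over C n" and sd: "Poly_Mapping.single c d \<in> polys_over C n"
    using polys_update_split[OF update.prems update.hyps] by auto
  have "Poly_Mapping.single a b * Poly_Mapping.single c d \<in> polys_over C n"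
  proof (cases "b = 0 \<or> d = 0")
    case True then show ?thesis by (auto simp: polys_zero)
  next
    case False
    then have "b \<in> C" "d \<in> C" "Poly_Mapping.keys a \<subseteq> {..<n}" "Poly_Mapping.keys c \<subseteq> {..<n}"
      using assms(1) sd unfolding polys_iff by (metis lookup_single_eq, metis lookup_single_eq, auto)
    then show ?thesis unfolding mult_single using sr
      by (intro polys_single) (auto simp: subr_def dest: subsetD[OF keys_add])
  qed
  then show ?case using update.IH[OF f] update.hyps
    by (simp add: update_eq_add distrib_left polys_add)
qed

lemma polys_mult: "P \<in> polys_over C n \<Longrightarrow> Q \<in> polys_over C n \<Longrightarrow> P * Q \<in> polys_over C n"
proof (induction P rule: update_induct)
  case const then show ?case by (simp add: polys_zero)
next
  case (update f a b)
  have f: "f \<in> polys_over C n" and sd: "Poly_Mapping.single a b \<in> polys_over C n"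
    using polys_update_split[OF update.prems(1) update.hyps] by auto
  show ?case using update.IH[OF f update.prems(2)] polys_mult_single[OF sd update.prems(2)] update.hyps
    by (simp add: update_eq_add distrib_right polys_add)
qed

lemma polys_uminus: "P \<in> polys_over C n \<Longrightarrow> - P \<in> polys_over C n"
  unfolding polys_iff using neg by auto

lemma polys_diff: "P \<in> polys_over C n \<Longrightarrow> Q \<in> polys_over C n \<Longrightarrow> P - Q \<in> polys_over C n"
  unfolding diff_conv_add_uminus by (intro polys_add polys_uminus)

lemma polys_sum: "(\<And>i. i \<in> F \<Longrightarrow> f i \<in> polys_over C n) \<Longrightarrow> sum f F \<in> polys_over C n"
  by (induction F rule: infinite_finite_induct) (auto intro: polys_zero polys_add)

lemma polys_one: "1 \<in> polys_over C n"
  using polys_single[of 1 0] sr by (simp add: subr_def)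

lemma polys_power: "P \<in> polys_over C n \<Longrightarrow> P ^ k \<in> polys_over C n"
  by (induction k) (auto intro: polys_one polys_mult)

lemma polys_var: "i < n \<Longrightarrow> var i \<in> polys_over C n"
  unfolding var_def using sr by (intro polys_single) (auto simp: subr_def)

lemma polys_const: "c \<in> C \<Longrightarrow> const c \<in> polys_over C n"
  unfolding const_def by (intro polys_single) auto

lemma ideal_zero: "0 \<in> ideal_gen C n f"
  unfolding ideal_gen_def using polys_zero by (intro CollectI exI[of _ "\<lambda>_. 0"]) auto

lemma ideal_add: "P \<in> ideal_gen C n f \<Longrightarrow> Q \<in> ideal_gen C n f \<Longrightarrow> P + Q \<in> ideal_gen C n f"
proof -
  assume "P \<in> ideal_gen C n f" "Q \<in> ideal_gen C n f"
  then obtain g g' where g: "P = (\<Sum>i<n. g i * f i)" "\<forall>i<n. g i \<in> polys_over C n"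
    and g': "Q = (\<Sum>i<n. g' i * f i)" "\<forall>i<n. g' i \<in> polys_over C n"
    unfolding ideal_gen_def by blast
  have "P + Q = (\<Sum>i<n. (g i + g' i) * f i)" unfolding g g' by (simp add: distrib_right sum.distrib)
  moreover have "\<forall>i<n. g i + g' i \<in> polys_over C n" using g g' polys_add by blast
  ultimately show ?thesis unfolding ideal_gen_def by (intro CollectI exI[of _ "\<lambda>i. g i + g' i"]) simp
qed

lemma ideal_sum: "(\<And>i. i \<in> F \<Longrightarrow> f' i \<in> ideal_gen C n f) \<Longrightarrow> sum f' F \<in> ideal_gen C n f"
  by (induction F rule: infinite_finite_induct) (auto intro: ideal_zero ideal_add)

lemma ideal_gen_elem: "q \<in> polys_over C n \<Longrightarrow> i < n \<Longrightarrow> q * f i \<in> ideal_gen C n f"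
proof -
  assume q: "q \<in> polys_over C n" and i: "i < n"
  have "(\<Sum>k<n. (if k = i then q else 0) * f k) = (\<Sum>k<n. if k = i then q * f k else 0)"
    by (rule sum.cong) auto
  then have "q * f i = (\<Sum>k<n. (if k = i then q else 0) * f k)"
    using i by simp
  moreover have "\<forall>k<n. (if k = i then q else 0) \<in> polys_over C n" using q polys_zero by auto
  ultimately show ?thesis unfolding ideal_gen_def by (intro CollectI exI[of _ "\<lambda>k. if k = i then q else 0"]) simp
qed

lemma ideal_polys: "(\<And>i. i < n \<Longrightarrow> f i \<in> polys_over C n) \<Longrightarrow> P \<in> ideal_gen C n f \<Longrightarrow> P \<in> polys_over C n"
  unfolding ideal_gen_def by (auto intro!: polys_sum polys_mult)

end




context hth
begin

abbreviation "Pol \<equiv> polys_over R n"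

lemma Rneg: "\<forall>x\<in>R. - x \<in> R" using R_uminus' by blast
abbreviation "ev \<equiv> eval_mpoly s u"
abbreviation "rel \<equiv> rel_polys p n A"
abbreviation "I \<equiv> ideal_gen R n rel"

lemmas pol_add = polys_add[OF subrR Rneg]
lemmas pol_mult = polys_mult[OF subrR Rneg]
lemmas pol_diff = polys_diff[OF subrR Rneg]
lemmas pol_sum = polys_sum[OF subrR Rneg]
lemmas pol_power = polys_power[OF subrR Rneg]
lemmas pol_var = polys_var[OF subrR Rneg]
lemmas pol_const = polys_const[OF subrR Rneg]
lemmas pol_single = polys_single[OF subrR Rneg]
lemmas pol_zero = polys_zero[OF subrR Rneg]
lemmas I_zero = ideal_zero[OF subrR Rneg]
lemmas I_add = ideal_add[OF subrR Rneg]
lemmas I_sum = ideal_sum[OF subrR Rneg]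
lemmas I_elem = ideal_gen_elem[OF subrR Rneg]
lemmas I_polys = ideal_polys[OF subrR Rneg]

lemmas ev_add = eval_add[OF s_am] and ev_mult = eval_mult[OF s_am] and ev_diff = eval_diff[OF s_am]
  and ev_sum = eval_sum[OF s_am] and ev_power = eval_power[OF s_am] and ev_var = eval_var[OF s_am]
  and ev_const = eval_const[OF s_am] and ev_zero = eval_zero[OF s_am]

lemma rel_pol: "i < n \<Longrightarrow> rel i \<in> Pol"
  unfolding rel_polys_def
  by (intro pol_diff pol_power pol_var pol_sum pol_mult pol_const) (auto intro: ARi)

lemma ev_rel: "i < n \<Longrightarrow> ev (rel i) = 0"
  unfolding rel_polys_def by (simp add: ev_diff ev_power ev_var ev_sum ev_mult ev_const u_pow)

lemma I_kernel: "P \<in> I \<Longrightarrow> P \<in> Pol \<and> ev P = 0"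
proof
  assume P: "P \<in> I"
  show "P \<in> Pol" by (rule I_polys[OF rel_pol P])
  from P obtain g where "P = (\<Sum>i<n. g i * rel i)" unfolding ideal_gen_def by blast
  then show "ev P = 0" by (simp add: ev_sum ev_mult ev_rel)
qed

lemma X_zero: "0 \<in> X" using s_X[of 0] R_0[OF dvr] by (simp add: s_zero)

lemma X_sum: "(\<And>i. i \<in> F \<Longrightarrow> f i \<in> X) \<Longrightarrow> sum f F \<in> X"
  by (induction F rule: infinite_finite_induct) (auto intro: X_zero X_add)

lemma X_prod: "(\<And>i. i \<in> F \<Longrightarrow> f i \<in> X) \<Longrightarrow> prod f F \<in> X"
  by (induction F rule: infinite_finite_induct) (auto intro: one_X X_mult)

lemma X_power: "x \<in> X \<Longrightarrow> x ^ k \<in> X"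
  by (induction k) (auto intro: one_X X_mult)

lemma image_eq: "ev ` Pol = X"
proof
  show "ev ` Pol \<subseteq> X"
  proof
    fix y assume "y \<in> ev ` Pol"
    then obtain P where P: "P \<in> Pol" "y = ev P" by blast
    have "ev P \<in> X" unfolding eval_mon
    proof (rule X_sum, rule X_mult)
      fix m assume m: "m \<in> Poly_Mapping.keys P"
      show "s (Poly_Mapping.lookup P m) \<in> X" using P(1) by (intro s_X) (simp add: polys_over_def)
      have "Poly_Mapping.keys m \<subseteq> {..<n}" using P(1) m by (simp add: polys_over_def)
      then show "mon u m \<in> X" unfolding mon_def by (auto intro!: X_prod X_power u_X)
    qed
    then show "y \<in> X" using P by simp
  qed
  show "X \<subseteq> ev ` Pol"
  proof (rule gen_alg_min)
    fix c assume "c \<in> R"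
    then show "s c \<in> ev ` Pol" using pol_const ev_const by (metis image_eqI)
  next
    show "u ` {..<n} \<subseteq> ev ` Pol" using pol_var ev_var by (auto intro!: image_eqI)
  next
    fix x y assume "x \<in> ev ` Pol" "y \<in> ev ` Pol"
    then obtain P Q where "P \<in> Pol" "Q \<in> Pol" "x = ev P" "y = ev Q" by blast
    then show "x + y \<in> ev ` Pol" "x * y \<in> ev ` Pol"
      using pol_add pol_mult ev_add ev_mult by (metis image_eqI)+
  qed
qed

section \<open>Reduced polynomials\<close>

definition Redp where "Redp = {r \<in> Pol. \<forall>m\<in>Poly_Mapping.keys r. \<forall>i. Poly_Mapping.lookup m i < p}"

lemma Redp_zero_mem: "0 \<in> Redp" unfolding Redp_def using pol_zero by simp

lemma Redp_add: assumes "r \<in> Redp" "r' \<in> Redp" shows "r + r' \<in> Redp"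
proof -
  have "r + r' \<in> Pol" using assms unfolding Redp_def by (auto intro: pol_add)
  moreover have "\<forall>m\<in>Poly_Mapping.keys (r + r'). \<forall>i. Poly_Mapping.lookup m i < p"
  proof (intro ballI allI)
    fix m i assume "m \<in> Poly_Mapping.keys (r + r')"
    then have "m \<in> Poly_Mapping.keys r \<or> m \<in> Poly_Mapping.keys r'" using keys_add[of r r'] by blast
    then show "Poly_Mapping.lookup m i < p" using assms unfolding Redp_def by blast
  qed
  ultimately show ?thesis unfolding Redp_def by blast
qed

lemma Redp_sum: "(\<And>i. i \<in> F \<Longrightarrow> f i \<in> Redp) \<Longrightarrow> sum f F \<in> Redp"
  by (induction F rule: infinite_finite_induct) (auto intro: Redp_zero_mem Redp_add)

lemma Redp_zero:
  assumes r: "r \<in> Redp" and e: "ev r = 0"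
  shows "r = 0"
proof -
  define \<phi> where "\<phi> m = restrict (Poly_Mapping.lookup m) {..<n}" for m :: "nat \<Rightarrow>\<^sub>0 nat"
  have kn: "Poly_Mapping.keys m \<subseteq> {..<n}" if "m \<in> Poly_Mapping.keys r" for m
    using r that unfolding Redp_def polys_over_def by auto
  have lp: "Poly_Mapping.lookup m i < p" if "m \<in> Poly_Mapping.keys r" for m i
    using r that unfolding Redp_def by auto
  have phiR: "\<phi> m \<in> Red" if "m \<in> Poly_Mapping.keys r" for m
    using lp[OF that] unfolding Red_def \<phi>_def by auto
  have monphi: "mon u m = mono (\<phi> m)" if "m \<in> Poly_Mapping.keys r" for m
  proof -
    have "mon u m = (\<Prod>i<n. u i ^ Poly_Mapping.lookup m i)"
      by (rule mon_superset) (use kn[OF that] in auto)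
    also have "\<dots> = mono (\<phi> m)" unfolding mono_def \<phi>_def by (rule prod.cong) auto
    finally show ?thesis .
  qed
  have injphi: "inj_on \<phi> (Poly_Mapping.keys r)"
  proof
    fix m m' assume mm: "m \<in> Poly_Mapping.keys r" "m' \<in> Poly_Mapping.keys r" "\<phi> m = \<phi> m'"
    show "m = m'"
    proof (rule poly_mapping_eqI)
      fix i show "Poly_Mapping.lookup m i = Poly_Mapping.lookup m' i"
      proof (cases "i < n")
        case True then show ?thesis using fun_cong[OF mm(3), of i] unfolding \<phi>_def by simp
      next
        case False
        then have "i \<notin> Poly_Mapping.keys m" "i \<notin> Poly_Mapping.keys m'" using kn mm by auto
        then show ?thesis by (simp add: in_keys_iff)
      qed
    qed
  qed
  define \<psi> where "\<psi> m = mono (\<phi> m)" for m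
  have injpsi: "inj_on \<psi> (Poly_Mapping.keys r)"
    unfolding \<psi>_def using comp_inj_on[OF injphi inj_on_subset[OF mono_inj]] phiR
    by (auto simp: o_def)
  define iv where "iv y = the_inv_into (Poly_Mapping.keys r) \<psi> y" for y
  have "0 = ev r" using e by simp
  also have "\<dots> = (\<Sum>m\<in>Poly_Mapping.keys r. s (Poly_Mapping.lookup r m) * \<psi> m)"
    unfolding eval_mon \<psi>_def by (rule sum.cong) (auto simp: monphi)
  also have "\<dots> = (\<Sum>y\<in>\<psi> ` Poly_Mapping.keys r. s (Poly_Mapping.lookup r (iv y)) * y)"
    by (simp add: sum.reindex[OF injpsi] iv_def the_inv_into_f_f[OF injpsi])
  finally have z: "(\<Sum>y\<in>\<psi> ` Poly_Mapping.keys r. s (Poly_Mapping.lookup r (iv y)) * y) =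
      (\<Sum>y\<in>\<psi> ` Poly_Mapping.keys r. s ((\<lambda>_. 0) y) * y)" by (simp add: s_zero)
  have sub: "\<psi> ` Poly_Mapping.keys r \<subseteq> E" unfolding E_def \<psi>_def using phiR by auto
  have "Poly_Mapping.keys r = {}"
  proof (rule ccontr)
    assume "Poly_Mapping.keys r \<noteq> {}"
    then obtain m where m: "m \<in> Poly_Mapping.keys r" by blast
    have "Poly_Mapping.lookup r (iv (\<psi> m)) = 0"
      by (rule indep_coeffs[OF E_indep sub _ z]) (use m in auto)
    then have "Poly_Mapping.lookup r m = 0" using m by (simp add: iv_def the_inv_into_f_f[OF injpsi])
    then show False using m by (simp add: in_keys_iff)
  qed
  then show ?thesis by simp
qed

definition degm :: "(nat \<Rightarrow>\<^sub>0 nat) \<Rightarrow> nat" where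
  "degm m = (\<Sum>i<n. Poly_Mapping.lookup m i)"

lemma degm_add: "degm (a + b) = degm a + degm b"
  unfolding degm_def by (simp add: lookup_add sum.distrib)

lemma degm_single: "i < n \<Longrightarrow> degm (Poly_Mapping.single i k) = k"
  unfolding degm_def by (simp add: lookup_single when_def)

lemma var_pow: "var i ^ k = Poly_Mapping.single (Poly_Mapping.single i k) (1::'k)"
proof (induction k)
  case 0 then show ?case by simp
next
  case (Suc k)
  have "var i ^ Suc k = Poly_Mapping.single (Poly_Mapping.single i k) (1::'k) * var i"
    by (simp add: Suc power_Suc2)
  also have "\<dots> = Poly_Mapping.single (Poly_Mapping.single i k + Poly_Mapping.single i 1) 1"
    unfolding var_def by (simp add: mult_single)
  also have "\<dots> = Poly_Mapping.single (Poly_Mapping.single i (Suc k)) 1"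
    by (simp add: single_add[symmetric])
  finally show ?case .
qed

lemma const_var: "const a * var j = Poly_Mapping.single (Poly_Mapping.single j 1) a"
  unfolding const_def var_def by (simp add: mult_single)

lemma reduce:
  "c \<in> R \<Longrightarrow> Poly_Mapping.keys m \<subseteq> {..<n} \<Longrightarrow>
     \<exists>Q r. Q \<in> I \<and> r \<in> Redp \<and> Poly_Mapping.single m c = Q + r"
proof (induction "degm m" arbitrary: m c rule: less_induct)
  case less
  show ?case
  proof (cases "\<forall>i<n. Poly_Mapping.lookup m i < p")
    case True
    have "\<forall>i. Poly_Mapping.lookup m i < p"
    proof
      fix i show "Poly_Mapping.lookup m i < p"
      proof (cases "i < n")
        case True then show ?thesis using \<open>\<forall>i<n. _\<close> by blast
      next
        case False
        then have "i \<notin> Poly_Mapping.keys m" using less.prems(2) by auto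
        then show ?thesis using p_ge2 by (simp add: in_keys_iff)
      qed
    qed
    then have "Poly_Mapping.single m c \<in> Redp"
      unfolding Redp_def using pol_single[OF less.prems] by auto
    then show ?thesis using I_zero by (intro exI[of _ 0] exI[of _ "Poly_Mapping.single m c"]) auto
  next
    case False
    then obtain i where i: "i < n" "p \<le> Poly_Mapping.lookup m i" by (auto simp: not_less)
    define m' where "m' = m - Poly_Mapping.single i p"
    have mm: "m = m' + Poly_Mapping.single i p"
    proof (rule poly_mapping_eqI)
      fix k show "Poly_Mapping.lookup m k = Poly_Mapping.lookup (m' + Poly_Mapping.single i p) k"
        unfolding m'_def using i by (cases "k = i") (auto simp: lookup_add lookup_minus lookup_single)
    qed
    have km': "Poly_Mapping.keys m' \<subseteq> {..<n}"
    proof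
      fix k assume "k \<in> Poly_Mapping.keys m'"
      then have "k \<in> Poly_Mapping.keys m" unfolding m'_def
        by (auto simp: in_keys_iff lookup_minus)
      then show "k \<in> {..<n}" using less.prems(2) by auto
    qed
    have dm: "degm m = degm m' + p" using mm degm_add degm_single[OF i(1)] by metis
    define mj where "mj j = m' + Poly_Mapping.single j 1" for j
    have kmj: "Poly_Mapping.keys (mj j) \<subseteq> {..<n}" if "j < n" for j
      unfolding mj_def using km' that keys_add[of m' "Poly_Mapping.single j 1"] by auto
    have dmj: "degm (mj j) < degm m" if "j < n" for j
      unfolding mj_def using dm degm_add degm_single[OF that] p_ge2 by simp
    have "\<forall>j\<in>{..<n}. \<exists>qr. fst qr \<in> I \<and> snd qr \<in> Redp \<and>
        Poly_Mapping.single (mj j) (c * A $$ (j, i)) = fst qr + snd qr"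
    proof
      fix j assume j: "j \<in> {..<n}"
      have jn: "j < n" using j by simp
      have cR: "c * A $$ (j, i) \<in> R" using less.prems(1) ARi[of j i] i j R_mult' by auto
      obtain Q r where "Q \<in> I" "r \<in> Redp" "Poly_Mapping.single (mj j) (c * A $$ (j, i)) = Q + r"
        using less.hyps[OF dmj[OF jn] cR kmj[OF jn]] by blast
      then show "\<exists>qr. fst qr \<in> I \<and> snd qr \<in> Redp \<and>
        Poly_Mapping.single (mj j) (c * A $$ (j, i)) = fst qr + snd qr"
        by (intro exI[of _ "(Q, r)"]) simp
    qed
    then obtain f where f: "\<forall>j\<in>{..<n}. fst (f j) \<in> I \<and> snd (f j) \<in> Redp \<and>
        Poly_Mapping.single (mj j) (c * A $$ (j, i)) = fst (f j) + snd (f j)"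
      by (metis bchoice)
    have rp: "var i ^ p = rel i + (\<Sum>j<n. const (A $$ (j, i)) * var j)"
      unfolding rel_polys_def by simp
    have "Poly_Mapping.single m c = Poly_Mapping.single m' c * var i ^ p"
      unfolding var_pow mult_single mm by simp
    also have "\<dots> = Poly_Mapping.single m' c * rel i + (\<Sum>j<n. Poly_Mapping.single (mj j) (c * A $$ (j, i)))"
      unfolding rp distrib_left sum_distrib_left const_var mult_single mj_def by simp
    also have "\<dots> = (Poly_Mapping.single m' c * rel i + (\<Sum>j<n. fst (f j))) + (\<Sum>j<n. snd (f j))"
      using f by (simp add: sum.distrib)
    finally have eq: "Poly_Mapping.single m c = (Poly_Mapping.single m' c * rel i + (\<Sum>j<n. fst (f j))) + (\<Sum>j<n. snd (f j))" .
    have "Poly_Mapping.single m' c * rel i + (\<Sum>j<n. fst (f j)) \<in> I"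
      using f by (intro I_add I_elem I_sum pol_single less.prems(1) km' i(1)) auto
    moreover have "(\<Sum>j<n. snd (f j)) \<in> Redp" using f by (intro Redp_sum) auto
    ultimately show ?thesis using eq by blast
  qed
qed

lemma poly_expand: "P = (\<Sum>m\<in>Poly_Mapping.keys P. Poly_Mapping.single m (Poly_Mapping.lookup P m))"
proof (rule poly_mapping_eqI)
  fix k
  have "Poly_Mapping.lookup (\<Sum>m\<in>Poly_Mapping.keys P. Poly_Mapping.single m (Poly_Mapping.lookup P m)) k
      = (\<Sum>m\<in>Poly_Mapping.keys P. if m = k then Poly_Mapping.lookup P m else 0)"
    by (simp add: lookup_sum lookup_single when_def)
  also have "\<dots> = Poly_Mapping.lookup P k" by (simp add: in_keys_iff)
  finally show "Poly_Mapping.lookup P k = Poly_Mapping.lookup (\<Sum>m\<in>Poly_Mapping.keys P. Poly_Mapping.single m (Poly_Mapping.lookup P m)) k" ..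
qed

lemma kernel_eq: "{P \<in> Pol. ev P = 0} = I"
proof
  show "I \<subseteq> {P \<in> Pol. ev P = 0}" using I_kernel by blast
  show "{P \<in> Pol. ev P = 0} \<subseteq> I"
  proof
    fix P assume "P \<in> {P \<in> Pol. ev P = 0}"
    then have P: "P \<in> Pol" "ev P = 0" by auto
    have "K \<subseteq> Poly_Mapping.keys P \<Longrightarrow> \<exists>Q r. Q \<in> I \<and> r \<in> Redp \<and>
        (\<Sum>m\<in>K. Poly_Mapping.single m (Poly_Mapping.lookup P m)) = Q + r" for K
    proof (induction K rule: infinite_finite_induct)
      case (infinite K) then show ?case using finite_subset[OF infinite.prems] by simp
    next
      case empty then show ?case using I_zero Redp_zero_mem by (intro exI[of _ 0]) auto
    next
      case (insert m K)
      then obtain Q r where Qr: "Q \<in> I" "r \<in> Redp" "(\<Sum>m\<in>K. Poly_Mapping.single m (Poly_Mapping.lookup P m)) = Q + r"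
        by auto
      have "Poly_Mapping.lookup P m \<in> R" "Poly_Mapping.keys m \<subseteq> {..<n}"
        using P(1) insert.prems unfolding polys_over_def by auto
      then obtain Q' r' where Qr': "Q' \<in> I" "r' \<in> Redp" "Poly_Mapping.single m (Poly_Mapping.lookup P m) = Q' + r'"
        using reduce by blast
      show ?case using insert.hyps Qr Qr'
        by (intro exI[of _ "Q' + Q"] exI[of _ "r' + r"]) (auto intro: I_add Redp_add simp: algebra_simps)
    qed
    then obtain Q r where Qr: "Q \<in> I" "r \<in> Redp" "P = Q + r"
      using poly_expand[of P] by (metis order_refl)
    have "ev r = 0" using Qr P(2) I_kernel[OF Qr(1)] ev_add[of u Q r] by simp
    then have "r = 0" using Redp_zero Qr(2) by blast
    then show "P \<in> I" using Qr by simp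
  qed
qed

end




context hctx
begin

lemma theta_mult:
  assumes Th: "\<Theta> \<in> carrier_mat n n" and M: "M \<in> carrier_mat n n" and i: "i < n"
  shows "theta_elems s n (\<Theta> * M) t i = (\<Sum>k<n. s (M $$ (k, i)) * theta_elems s n \<Theta> t k)"
proof -
  have "theta_elems s n (\<Theta> * M) t i = (\<Sum>j<n. \<Sum>k<n. s (M $$ (k, i)) * (s (\<Theta> $$ (j, k)) * t j))"
    unfolding theta_elems_def
  proof (rule sum.cong[OF refl])
    fix j assume j: "j \<in> {..<n}"
    have "(\<Theta> * M) $$ (j, i) = (\<Sum>k<n. \<Theta> $$ (j, k) * M $$ (k, i))"
      by (rule mat_mult_idx[OF Th M]) (use j i in auto)
    then have "s ((\<Theta> * M) $$ (j, i)) * t j = (\<Sum>k<n. s (\<Theta> $$ (j, k) * M $$ (k, i)) * t j)"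
      by (simp add: s_sum sum_distrib_right)
    also have "\<dots> = (\<Sum>k<n. s (M $$ (k, i)) * (s (\<Theta> $$ (j, k)) * t j))"
      by (simp add: s_mult mult_ac)
    finally show "s ((\<Theta> * M) $$ (j, i)) * t j = (\<Sum>k<n. s (M $$ (k, i)) * (s (\<Theta> $$ (j, k)) * t j))" .
  qed
  also have "\<dots> = (\<Sum>k<n. \<Sum>j<n. s (M $$ (k, i)) * (s (\<Theta> $$ (j, k)) * t j))" by (rule sum.swap)
  also have "\<dots> = (\<Sum>k<n. s (M $$ (k, i)) * theta_elems s n \<Theta> t k)"
    by (simp add: theta_elems_def sum_distrib_left)
  finally show ?thesis .
qed

lemma incl:
  assumes h1: "hth s sh shh tp tp3 \<Delta> \<epsilon> S v p n t B A \<Theta>"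
    and M: "M \<in> carrier_mat n n" "entries_in R M" and eq: "\<Theta>' = \<Theta> * M"
  shows "gen_alg s R (theta_elems s n \<Theta>' t ` {..<n}) \<subseteq> gen_alg s R (theta_elems s n \<Theta> t ` {..<n})"
proof -
  interpret t1: hth s sh shh tp tp3 \<Delta> \<epsilon> S v p n t B A \<Theta> by (rule h1)
  show ?thesis
  proof (rule gen_alg_min)
    fix c assume "c \<in> R" then show "s c \<in> t1.X" by (rule t1.s_X)
  next
    show "theta_elems s n \<Theta>' t ` {..<n} \<subseteq> t1.X"
    proof
      fix y assume "y \<in> theta_elems s n \<Theta>' t ` {..<n}"
      then obtain i where i: "i < n" "y = theta_elems s n \<Theta>' t i" by auto
      have "y = (\<Sum>k<n. s (M $$ (k, i)) * t1.u k)" using theta_mult[OF t1.Thc M(1) i(1)] i eq by simp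
      moreover have "(\<Sum>k<n. s (M $$ (k, i)) * t1.u k) \<in> t1.X"
        using M i unfolding entries_in_def by (intro t1.X_sum t1.X_scal t1.u_X) auto
      ultimately show "y \<in> t1.X" by simp
    qed
  qed (auto intro: t1.X_add t1.X_mult)
qed

lemma part2:
  assumes h1: "hth s sh shh tp tp3 \<Delta> \<epsilon> S v p n t B A \<Theta>"
    and h2: "hth s sh shh tp tp3 \<Delta> \<epsilon> S v p n t B A' \<Theta>'"
  shows "gen_alg s R (theta_elems s n \<Theta> t ` {..<n}) = gen_alg s R (theta_elems s n \<Theta>' t ` {..<n})
     \<longleftrightarrow> (\<exists>M. GL_over R n M \<and> \<Theta>' = \<Theta> * M)"
proof -
  interpret t1: hth s sh shh tp tp3 \<Delta> \<epsilon> S v p n t B A \<Theta> by (rule h1)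
  interpret t2: hth s sh shh tp tp3 \<Delta> \<epsilon> S v p n t B A' \<Theta>' by (rule h2)
  show ?thesis
  proof
    assume eqX: "t1.X = t2.X"
    obtain N where N: "N \<in> carrier_mat n n" "\<Theta> * N = 1\<^sub>m n" "N * \<Theta> = 1\<^sub>m n"
      using t1.ThGL unfolding GL_over_def by blast
    obtain N' where N': "N' \<in> carrier_mat n n" "\<Theta>' * N' = 1\<^sub>m n" "N' * \<Theta>' = 1\<^sub>m n"
      using t2.ThGL unfolding GL_over_def by blast
    define M where "M = N * \<Theta>'"
    define M' where "M' = N' * \<Theta>"
    have Mc: "M \<in> carrier_mat n n" unfolding M_def using N(1) t2.Thc by simp
    have M'c: "M' \<in> carrier_mat n n" unfolding M'_def using N'(1) t1.Thc by simp
    have ThM: "\<Theta> * M = \<Theta>'"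
      unfolding M_def using assoc_mult_mat[OF t1.Thc N(1) t2.Thc, symmetric] N(2) t2.Thc
      by (simp add: left_mult_one_mat)
    have ThM': "\<Theta>' * M' = \<Theta>"
      unfolding M'_def using assoc_mult_mat[OF t2.Thc N'(1) t1.Thc, symmetric] N'(2) t1.Thc
      by (simp add: left_mult_one_mat)
    have MR: "entries_in R M" unfolding entries_in_def
    proof (intro allI impI)
      fix k i assume k: "k < dim_row M" and i: "i < dim_col M"
      then have kn: "k < n" and iin: "i < n" using Mc by auto
      have "t2.u i = (\<Sum>k<n. s (M $$ (k, i)) * t1.u k)"
        using theta_mult[OF t1.Thc Mc iin] ThM by simp
      moreover have "t2.u i \<in> t1.X" using eqX t2.u_X[OF iin] by simp
      ultimately show "M $$ (k, i) \<in> R" using t1.coords_R kn by metis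
    qed
    have M'R: "entries_in R M'" unfolding entries_in_def
    proof (intro allI impI)
      fix k i assume k: "k < dim_row M'" and i: "i < dim_col M'"
      then have kn: "k < n" and iin: "i < n" using M'c by auto
      have "t1.u i = (\<Sum>k<n. s (M' $$ (k, i)) * t2.u k)"
        using theta_mult[OF t2.Thc M'c iin] ThM' by simp
      moreover have "t1.u i \<in> t2.X" using eqX t1.u_X[OF iin] by simp
      ultimately show "M' $$ (k, i) \<in> R" using t2.coords_R kn by metis
    qed
    have "M * M' = N * (\<Theta>' * M')"
      unfolding M_def using assoc_mult_mat[OF N(1) t2.Thc M'c] by simp
    also have "\<dots> = 1\<^sub>m n" using ThM' N(3) by simp
    finally have MM': "M * M' = 1\<^sub>m n" .
    have "M' * M = N' * (\<Theta> * M)"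
      unfolding M'_def using assoc_mult_mat[OF N'(1) t1.Thc Mc] by simp
    also have "\<dots> = 1\<^sub>m n" using ThM N'(3) by simp
    finally have M'M: "M' * M = 1\<^sub>m n" .
    have "GL_over R n M" unfolding GL_over_def using Mc MR M'c M'R MM' M'M by blast
    then show "\<exists>M. GL_over R n M \<and> \<Theta>' = \<Theta> * M" using ThM by metis
  next
    assume "\<exists>M. GL_over R n M \<and> \<Theta>' = \<Theta> * M"
    then obtain M N where M: "M \<in> carrier_mat n n" "entries_in R M" "N \<in> carrier_mat n n" "entries_in R N"
      "M * N = 1\<^sub>m n" "\<Theta>' = \<Theta> * M" unfolding GL_over_def by blast
    have "\<Theta>' * N = \<Theta> * (M * N)" using M assoc_mult_mat[OF t1.Thc M(1) M(3)] by simp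
    also have "\<dots> = \<Theta>" using M(5) t1.Thc by simp
    finally have ThN: "\<Theta> = \<Theta>' * N" ..
    have "t2.X \<subseteq> t1.X" by (rule incl[OF h1 M(1,2) M(6)])
    moreover have "t1.X \<subseteq> t2.X" by (rule incl[OF h2 M(3,4) ThN])
    ultimately show "t1.X = t2.X" by blast
  qed
qed

end

theorem theorem4p2:
  fixes s :: "'k::field \<Rightarrow> 'h::comm_ring_1"
    and sh :: "'k \<Rightarrow> 'hh::comm_ring_1" and shh :: "'k \<Rightarrow> 'hhh::comm_ring_1"
    and tp :: "'h \<Rightarrow> 'h \<Rightarrow> 'hh" and tp3 :: "'h \<Rightarrow> 'h \<Rightarrow> 'h \<Rightarrow> 'hhh"
    and \<Delta> :: "'h \<Rightarrow> 'hh" and \<epsilon> :: "'h \<Rightarrow> 'k" and S :: "'h \<Rightarrow> 'h"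
    and v :: "'k \<Rightarrow> int" and p n :: nat and t :: "nat \<Rightarrow> 'h"
    and B A \<Theta> :: "'k mat"
  defines "R \<equiv> valuation_ring v"
  assumes dvr: "discrete_valuation v"
    and char_p: "prime p" "of_nat p = (0::'k)"
    and hopf: "comm_cocomm_hopf s sh shh tp tp3 \<Delta> \<epsilon> S"
    and rank: "\<exists>e. basis_over s UNIV e {..<p ^ n} (UNIV :: 'h set)"
    and prim_gen: "gen_alg s UNIV (prim tp \<Delta>) = UNIV"
    and prim_basis: "basis_over s UNIV t {..<n} (prim tp \<Delta>)"
    and B: "B \<in> carrier_mat n n" "entries_in R B"
      "\<forall>i<n. t i ^ p = (\<Sum>j<n. s (B $$ (j, i)) * t j)"
    and A: "A \<in> carrier_mat n n" "entries_in R A"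
    and Theta: "GL_over UNIV n \<Theta>" "\<Theta> * A = B * frob_mat p \<Theta>"
  shows
    "(\<forall>i<n. theta_elems s n \<Theta> t i \<in> prim tp \<Delta>)
     \<and> {P \<in> polys_over R n. eval_mpoly s (theta_elems s n \<Theta> t) P = 0}
         = ideal_gen R n (rel_polys p n A)
     \<and> eval_mpoly s (theta_elems s n \<Theta> t) ` polys_over R n
         = gen_alg s R (theta_elems s n \<Theta> t ` {..<n})
     \<and> hopf_order s sh tp \<Delta> \<epsilon> S R (gen_alg s R (theta_elems s n \<Theta> t ` {..<n}))
     \<and> (\<forall>A' \<Theta>'. A' \<in> carrier_mat n n \<and> entries_in R A' \<and>
           GL_over UNIV n \<Theta>' \<and> \<Theta>' * A' = B * frob_mat p \<Theta>' \<longrightarrow>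
           (gen_alg s R (theta_elems s n \<Theta> t ` {..<n})
              = gen_alg s R (theta_elems s n \<Theta>' t ` {..<n})
            \<longleftrightarrow> (\<exists>M. GL_over R n M \<and> \<Theta>' = \<Theta> * M)))"
proof -
  interpret hc: hctx s sh shh tp tp3 \<Delta> \<epsilon> S v p n t B
    using dvr char_p hopf rank prim_gen prim_basis B unfolding R_def by unfold_locales auto
  have h1: "hth s sh shh tp tp3 \<Delta> \<epsilon> S v p n t B A \<Theta>"
    using A Theta unfolding R_def by unfold_locales auto
  interpret th: hth s sh shh tp tp3 \<Delta> \<epsilon> S v p n t B A \<Theta> by (rule h1)
  have p2: "\<forall>A' \<Theta>'. A' \<in> carrier_mat n n \<and> entries_in R A' \<and>
           GL_over UNIV n \<Theta>' \<and> \<Theta>' * A' = B * frob_mat p \<Theta>' \<longrightarrow>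
           (gen_alg s R (theta_elems s n \<Theta> t ` {..<n})
              = gen_alg s R (theta_elems s n \<Theta>' t ` {..<n})
            \<longleftrightarrow> (\<exists>M. GL_over R n M \<and> \<Theta>' = \<Theta> * M))"
  proof (intro allI impI)
    fix A' \<Theta>' assume H: "A' \<in> carrier_mat n n \<and> entries_in R A' \<and>
           GL_over UNIV n \<Theta>' \<and> \<Theta>' * A' = B * frob_mat p \<Theta>'"
    have h2: "hth s sh shh tp tp3 \<Delta> \<epsilon> S v p n t B A' \<Theta>'"
      using H unfolding R_def by unfold_locales auto
    show "(gen_alg s R (theta_elems s n \<Theta> t ` {..<n})
              = gen_alg s R (theta_elems s n \<Theta>' t ` {..<n})
            \<longleftrightarrow> (\<exists>M. GL_over R n M \<and> \<Theta>' = \<Theta> * M))"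
      unfolding R_def by (rule hc.part2[OF h1 h2])
  qed
  show ?thesis
    unfolding R_def
    using th.u_prim th.kernel_eq th.image_eq th.X_hopf_order p2[unfolded R_def] by blast
qed


end
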